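(* Let $F/\mathbb{Q}$ be a totally real number field of degree $n$ with ring of integers $R$, and let $H=\left(\frac{a,b}{F}\right)$, with $a,b\in R\setminus\{0\}$, be a quaternion $F$-algebra which is a division algebra and satisfies $H\otimes_{\mathbb{Q}}\mathbb{R}\cong\mathrm{M}(2,\mathbb{R})\times\mathbb{H}^{n-1}$. Then any Fuchsian code associated to the natural order $R[1,I,J,K]$ has code rate at least $3n$.
   Context: $H=\left(\frac{a,b}{F}\right)$ is the $F$-algebra with basis $1,I,J,K$ and relations $I^2=a$, $J^2=b$, $K=IJ=-JI$, with reduced norm $\mathrm{N}(x+yI+zJ+tK)=x^2-ay^2-bz^2+abt^2$; $\mathbb{H}$ denotes Hamilton's quaternions. The natural order is $\mathcal{O}=R+RI+RJ+RK$ (an $R$-order since $a,b\in R$). Viewing $F\subset\mathbb{R}$ via an embedding with $a>0$, let $\phi(x+yI+zJ+tK)=\begin{pmatrix} x+y\sqrt a & z+t\sqrt a\\ b(z-t\sqrt a) & x-y\sqrt a\end{pmatrix}$ and $\Gamma=\phi(\mathcal{O}^*_+)$, where $\mathcal{O}^*_+$ is the group of units of $\mathcal{O}$ with positive reduced norm; $\Gamma$ acts on the upper half-plane $\mathcal{H}$ by Möbius transformations. A fundamental domain for $\Gamma$ is a closed hyperbolic polygon $\mathcal{F}\subset\mathcal{H}$ such that no two distinct interior points are $\Gamma$-equivalent (and only $\pm\mathrm{Id}$ fixes an interior point) and every point of $\mathcal{H}$ is $\Gamma$-equivalent to a point of $\mathcal{F}$. A Fuchsian code associated to $\Gamma$ is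 $\mathcal{C}=\{\pm g(\tau): g\in S\}\subset\mathbb{C}$ for a fundamental domain $\mathcal{F}$, a finite set $S\subset\Gamma$ and an interior point $\tau$ of $\mathcal{F}$. Code rate: fix a $\mathbb{Z}$-basis $\theta_1=1,\dots,\theta_n$ of $R$, write $x=\sum_k x_k\theta_k$, and similarly $y,z,t$ with indeterminate integer coordinates $y_k,z_k,t_k$; then $x^2-ay^2-bz^2+abt^2=\sum_{k=1}^n g_k\theta_k$ with $g_k\in\mathbb{Z}[x_1,\dots,t_n]$. The algebraic set $A(\Gamma)\subset\mathbb{C}^{4n}$ is defined by $g_1=1$, $g_k=0$ ($2\le k\le n$), and the code rate of a Fuchsian code attached to $\Gamma$ is $\dim A(\Gamma)$. *)

theory Defs
  imports "HOL-Analysis.Analysis" "HOL-Algebra.Ideal" "HOL-Computational_Algebra.Polynomial"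
begin

text \<open>A subfield F of the reals (every number field embeds in the reals when it is
totally real; the concrete embedding plays no role for the code rate).\<close>
definition real_subfield :: "real set \<Rightarrow> bool" where
  "real_subfield F \<longleftrightarrow> 0 \<in> F \<and> 1 \<in> F \<and>
     (\<forall>x\<in>F. \<forall>y\<in>F. x + y \<in> F \<and> x - y \<in> F \<and> x * y \<in> F) \<and>
     (\<forall>x\<in>F. x \<noteq> 0 \<longrightarrow> inverse x \<in> F)"

definition number_field_deg :: "real set \<Rightarrow> nat \<Rightarrow> bool" where
  "number_field_deg F n \<longleftrightarrow> real_subfield F \<and>
     (\<exists>e :: nat \<Rightarrow> real. (\<forall>i<n. e i \<in> F) \<and>
        (\<forall>x\<in>F. \<exists>!q :: nat \<Rightarrow> rat. (\<forall>i\<ge>n. q i = 0) \<and> x = (\<Sum>i<n. of_rat (q i) * e i)))"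

definition field_emb :: "real set \<Rightarrow> (real \<Rightarrow> complex) \<Rightarrow> bool" where
  "field_emb F \<sigma> \<longleftrightarrow> \<sigma> 1 = 1 \<and>
     (\<forall>x\<in>F. \<forall>y\<in>F. \<sigma> (x + y) = \<sigma> x + \<sigma> y \<and> \<sigma> (x * y) = \<sigma> x * \<sigma> y) \<and>
     (\<forall>x. x \<notin> F \<longrightarrow> \<sigma> x = 0)"

definition totally_real :: "real set \<Rightarrow> bool" where
  "totally_real F \<longleftrightarrow> (\<forall>\<sigma>. field_emb F \<sigma> \<longrightarrow> (\<forall>x\<in>F. \<sigma> x \<in> \<real>))"

definition ring_of_integers :: "real set \<Rightarrow> real set" where
  "ring_of_integers F = {x \<in> F. \<exists>p :: int poly. lead_coeff p = 1 \<and> poly (map_poly of_int p) x = 0}"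

definition integral_basis :: "real set \<Rightarrow> nat \<Rightarrow> (nat \<Rightarrow> real) \<Rightarrow> bool" where
  "integral_basis F n \<theta> \<longleftrightarrow> (\<forall>k<n. \<theta> k \<in> ring_of_integers F) \<and>
     (\<forall>x\<in>ring_of_integers F. \<exists>!c :: nat \<Rightarrow> int. (\<forall>k\<ge>n. c k = 0) \<and>
        x = (\<Sum>k<n. of_int (c k) * \<theta> k))"

definition zcoord :: "nat \<Rightarrow> (nat \<Rightarrow> real) \<Rightarrow> real \<Rightarrow> nat \<Rightarrow> int" where
  "zcoord n \<theta> x = (THE c. (\<forall>k\<ge>n. c k = 0) \<and> x = (\<Sum>k<n. of_int (c k) * \<theta> k))"

section \<open>Quaternion algebras (a,b / K), elements as 4-tuples (x,y,z,t) = x + yI + zJ + tK\<close>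

type_synonym 'a quat4 = "'a \<times> 'a \<times> 'a \<times> 'a"

definition qmult :: "'a::comm_ring_1 \<Rightarrow> 'a \<Rightarrow> 'a quat4 \<Rightarrow> 'a quat4 \<Rightarrow> 'a quat4" where
  "qmult a b p q = (case p of (x1, y1, z1, t1) \<Rightarrow> case q of (x2, y2, z2, t2) \<Rightarrow>
     (x1*x2 + a*y1*y2 + b*z1*z2 - a*b*t1*t2,
      x1*y2 + y1*x2 - b*z1*t2 + b*t1*z2,
      x1*z2 + z1*x2 + a*y1*t2 - a*t1*y2,
      x1*t2 + t1*x2 + y1*z2 - z1*y2))"

definition qadd :: "'a::comm_ring_1 quat4 \<Rightarrow> 'a quat4 \<Rightarrow> 'a quat4" where
  "qadd p q = (case p of (x1, y1, z1, t1) \<Rightarrow> case q of (x2, y2, z2, t2) \<Rightarrow>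
     (x1 + x2, y1 + y2, z1 + z2, t1 + t2))"

definition qscale :: "'a::comm_ring_1 \<Rightarrow> 'a quat4 \<Rightarrow> 'a quat4" where
  "qscale c p = (case p of (x, y, z, t) \<Rightarrow> (c*x, c*y, c*z, c*t))"

definition quat_division_algebra :: "real set \<Rightarrow> real \<Rightarrow> real \<Rightarrow> bool" where
  "quat_division_algebra F a b \<longleftrightarrow>
     (\<forall>x\<in>F. \<forall>y\<in>F. \<forall>z\<in>F. \<forall>t\<in>F. (x, y, z, t) \<noteq> (0, 0, 0, 0) \<longrightarrow>
        (\<exists>x'\<in>F. \<exists>y'\<in>F. \<exists>z'\<in>F. \<exists>t'\<in>F.
           qmult a b (x, y, z, t) (x', y', z', t') = (1, 0, 0, 0) \<and>
           qmult a b (x', y', z', t') (x, y, z, t) = (1, 0, 0, 0)))"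

definition real_quat_iso_hamilton :: "real \<Rightarrow> real \<Rightarrow> bool" where
  "real_quat_iso_hamilton a b \<longleftrightarrow> (\<exists>\<psi> :: real quat4 \<Rightarrow> real quat4. bij \<psi> \<and>
     (\<forall>p q. \<psi> (qadd p q) = qadd (\<psi> p) (\<psi> q)) \<and>
     (\<forall>c p. \<psi> (qscale c p) = qscale c (\<psi> p)) \<and>
     (\<forall>p q. \<psi> (qmult a b p q) = qmult (-1) (-1) (\<psi> p) (\<psi> q)))"

definition real_quat_iso_M2 :: "real \<Rightarrow> real \<Rightarrow> bool" where
  "real_quat_iso_M2 a b \<longleftrightarrow> (\<exists>\<psi> :: real quat4 \<Rightarrow> real^2^2. bij \<psi> \<and>
     (\<forall>p q. \<psi> (qadd p q) = \<psi> p + \<psi> q) \<and>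
     (\<forall>c p. \<psi> (qscale c p) = c *\<^sub>R \<psi> p) \<and>
     (\<forall>p q. \<psi> (qmult a b p q) = \<psi> p ** \<psi> q))"

text \<open>Coefficient of theta k in c * (sum_{i,j} w_i w_j theta_i theta_j), where c is in R,
  computed formally via the structure constants of R w.r.t. the basis theta.\<close>
definition quad_coord :: "nat \<Rightarrow> (nat \<Rightarrow> real) \<Rightarrow> real \<Rightarrow> (nat \<Rightarrow> complex) \<Rightarrow> nat \<Rightarrow> complex" where
  "quad_coord n \<theta> c w k =
     (\<Sum>l<n. \<Sum>p<n. \<Sum>i<n. \<Sum>j<n.
        of_int (zcoord n \<theta> c l * zcoord n \<theta> (\<theta> i * \<theta> j) p * zcoord n \<theta> (\<theta> l * \<theta> p) k)
        * w i * w j)"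

text \<open>The polynomial g_k (k = 0..n-1, with theta 0 = 1) evaluated at a point v of C^(4n),
  whose coordinates are x_i = v i, y_i = v (n+i), z_i = v (2n+i), t_i = v (3n+i).\<close>
definition gpoly :: "nat \<Rightarrow> (nat \<Rightarrow> real) \<Rightarrow> real \<Rightarrow> real \<Rightarrow> nat \<Rightarrow> (nat \<Rightarrow> complex) \<Rightarrow> complex" where
  "gpoly n \<theta> a b k v =
     quad_coord n \<theta> 1 (\<lambda>i. v i) k
     - quad_coord n \<theta> a (\<lambda>i. v (n + i)) k
     - quad_coord n \<theta> b (\<lambda>i. v (2*n + i)) k
     + quad_coord n \<theta> (a * b) (\<lambda>i. v (3*n + i)) k"

definition code_algset :: "nat \<Rightarrow> (nat \<Rightarrow> real) \<Rightarrow> real \<Rightarrow> real \<Rightarrow> (nat \<Rightarrow> complex) set" where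
  "code_algset n \<theta> a b = {v. (\<forall>i\<ge>4*n. v i = 0) \<and> gpoly n \<theta> a b 0 v = 1 \<and>
       (\<forall>k. 1 \<le> k \<and> k < n \<longrightarrow> gpoly n \<theta> a b k v = 0)}"

inductive_set polyfun :: "nat \<Rightarrow> ((nat \<Rightarrow> complex) \<Rightarrow> complex) set" for N where
  pf_const: "(\<lambda>_. c) \<in> polyfun N"
| pf_var: "i < N \<Longrightarrow> (\<lambda>v. v i) \<in> polyfun N"
| pf_add: "f \<in> polyfun N \<Longrightarrow> g \<in> polyfun N \<Longrightarrow> (\<lambda>v. f v + g v) \<in> polyfun N"
| pf_mult: "f \<in> polyfun N \<Longrightarrow> g \<in> polyfun N \<Longrightarrow> (\<lambda>v. f v * g v) \<in> polyfun N"

text \<open>Coordinate ring C[X_1..X_N]/I(A) of an algebraic set A, realised as the ring of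
  polynomial functions restricted to A.\<close>
definition coord_ring :: "nat \<Rightarrow> (nat \<Rightarrow> complex) set \<Rightarrow> ((nat \<Rightarrow> complex) \<Rightarrow> complex) ring" where
  "coord_ring N A = \<lparr>carrier = (\<lambda>f. restrict f A) ` polyfun N,
     monoid.mult = (\<lambda>f g. restrict (\<lambda>v. f v * g v) A),
     one = restrict (\<lambda>_. 1) A,
     zero = restrict (\<lambda>_. 0) A,
     add = (\<lambda>f g. restrict (\<lambda>v. f v + g v) A)\<rparr>"

text \<open>Dimension of an algebraic set = Krull dimension of its coordinate ring
  (supremum of lengths d of strict chains P_0 < ... < P_d of prime ideals).\<close>
definition alg_set_dim :: "nat \<Rightarrow> (nat \<Rightarrow> complex) set \<Rightarrow> enat" where
  "alg_set_dim N A = Sup {enat d | d. \<exists>P :: nat \<Rightarrow> ((nat \<Rightarrow> complex) \<Rightarrow> complex) set.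
       (\<forall>i\<le>d. primeideal (P i) (coord_ring N A)) \<and> (\<forall>i<d. P i \<subset> P (Suc i))}"

end

theory Submission
  imports Defs "Jordan_Normal_Form.Char_Poly" "HOL-Complex_Analysis.Complex_Analysis"
begin


lemma sum_delta_mul: "finite A \<Longrightarrow> (\<Sum>k\<in>A. (if k = j then c else 0) * f k) = (if j \<in> A then c * f j else (0::'a::comm_semiring_1))"
proof -
  assume "finite A"
  have "(\<Sum>k\<in>A. (if k = j then c else 0) * f k) = (\<Sum>k\<in>A. if k = j then c * f k else 0)"
    by (intro sum.cong) auto
  then show ?thesis using \<open>finite A\<close> by (simp add: sum.delta')
qed
lemma sum_mul_delta: "finite A \<Longrightarrow> (\<Sum>k\<in>A. f k * (if k = j then c else 0)) = (if j \<in> A then f j * c else (0::'a::comm_semiring_1))"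
  using sum_delta_mul[of A j c f] by (simp add: mult.commute)
lemma of_int_ind: "of_int (if P then 1 else 0) = (if P then 1 else (0::'a::ring_1))" by simp


definition aint :: "real \<Rightarrow> bool" where
  "aint x \<longleftrightarrow> (\<exists>p::int poly. lead_coeff p = 1 \<and> poly (map_poly of_int p) x = 0)"

lemma eig_aint:
  fixes M :: "int mat" and w :: "real vec"
  assumes M: "M \<in> carrier_mat N N" and w: "w \<in> carrier_vec N" "w \<noteq> 0\<^sub>v N"
    and ev: "map_mat of_int M *\<^sub>v w = \<gamma> \<cdot>\<^sub>v w"
  shows "aint \<gamma>"
proof -
  let ?M = "map_mat (of_int::int\<Rightarrow>real) M"
  have M': "?M \<in> carrier_mat N N" using M by simp
  have "eigenvector ?M w \<gamma>" unfolding eigenvector_def using M w ev by auto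
  hence "eigenvalue ?M \<gamma>" unfolding eigenvalue_def by blast
  hence "poly (char_poly ?M) \<gamma> = 0" using eigenvalue_root_char_poly[OF M'] by simp
  moreover have "char_poly ?M = map_poly of_int (char_poly M)" by (rule of_int_hom.char_poly_hom[OF M])
  moreover have "lead_coeff (char_poly M) = 1" using degree_monic_char_poly[OF M] by simp
  ultimately show ?thesis unfolding aint_def by metis
qed

lemma sum_lessThan_add_nat: "(\<Sum>l<a+b. f l) = (\<Sum>l<a. f l) + (\<Sum>l<b. f (a + l))" for f :: "nat \<Rightarrow> 'a::comm_monoid_add"
  by (induction b) (auto simp: add.assoc)

lemma sum_div_mod:
  fixes g :: "nat \<Rightarrow> nat \<Rightarrow> 'a::comm_monoid_add"
  assumes "e > 0"
  shows "(\<Sum>l<d*e. g (l div e) (l mod e)) = (\<Sum>i<d. \<Sum>j<e. g i j)"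
proof (induction d)
  case (Suc d)
  have "(\<Sum>l<Suc d*e. g (l div e) (l mod e)) = (\<Sum>l<d*e. g (l div e) (l mod e)) + (\<Sum>l<e. g ((d*e+l) div e) ((d*e+l) mod e))"
    by (simp only: mult_Suc add.commute[of e] sum_lessThan_add_nat)
  also have "(\<Sum>l<e. g ((d*e+l) div e) ((d*e+l) mod e)) = (\<Sum>l<e. g d l)"
    using assms by (intro sum.cong) auto
  finally show ?case using Suc by simp
qed simp

lemma pow_red:
  fixes x :: real and p :: "int poly"
  assumes lc: "lead_coeff p = 1" and rt: "poly (map_poly of_int p) x = 0" and d: "degree p = Suc d'"
  shows "\<exists>c::nat\<Rightarrow>int. x^k = (\<Sum>i<Suc d'. of_int (c i) * x^i)"
proof (induction k)
  case 0
  show ?case by (rule exI[of _ "\<lambda>i. if i = 0 then 1 else 0"]) (subst sum.lessThan_Suc_shift, simp)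
next
  case (Suc k)
  then obtain c where c: "x^k = (\<Sum>i<Suc d'. of_int (c i) * x^i)" by blast
  have "0 = (\<Sum>i\<le>Suc d'. of_int (coeff p i) * x ^ i)"
    using rt by (simp add: poly_altdef d of_int_hom.degree_map_poly_hom)
  also have "\<dots> = (\<Sum>i<Suc d'. of_int (coeff p i) * x ^ i) + x ^ Suc d'"
    using lc d by (simp add: lessThan_Suc_atMost[symmetric])
  finally have xd: "x ^ Suc d' = - (\<Sum>i<Suc d'. of_int (coeff p i) * x ^ i)" by linarith
  have "x ^ Suc k = x * (\<Sum>i<Suc d'. of_int (c i) * x^i)" using c by simp
  also have "\<dots> = (\<Sum>i<Suc d'. of_int (c i) * x^(Suc i))" by (simp add: sum_distrib_left algebra_simps)
  also have "\<dots> = (\<Sum>i<d'. of_int (c i) * x^(Suc i)) + of_int (c d') * x^Suc d'" by simp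
  also have "(\<Sum>i<d'. of_int (c i) * x^(Suc i)) = (\<Sum>i<Suc d'. of_int (if i = 0 then 0 else c (i - 1)) * x^i)"
    by (subst sum.lessThan_Suc_shift) simp
  finally have "x ^ Suc k = (\<Sum>i<Suc d'. of_int (if i = 0 then 0 else c (i - 1)) * x^i) + of_int (c d') * - (\<Sum>i<Suc d'. of_int (coeff p i) * x ^ i)"
    using xd by simp
  also have "\<dots> = (\<Sum>i<Suc d'. of_int ((if i = 0 then 0 else c (i - 1)) - c d' * coeff p i) * x^i)"
    by (simp add: left_diff_distrib right_diff_distrib sum_subtractf sum_distrib_left mult.assoc)
  finally show ?case by (rule exI[where x="\<lambda>i. (if i = 0 then 0 else c (i - 1)) - c d' * coeff p i"])
qed

lemma aint_degree:
  assumes "lead_coeff p = 1" "poly (map_poly of_int p) (x::real) = 0"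
  shows "\<exists>d'. degree p = Suc d'"
proof (cases "degree p")
  case 0
  then show ?thesis using assms by (simp add: poly_altdef of_int_hom.degree_map_poly_hom)
qed auto

lemma aint_mult:
  assumes "aint x" "aint y"
  shows "aint (x * y)"
proof -
  obtain p where p: "lead_coeff p = 1" "poly (map_poly of_int p) x = 0" using assms(1) aint_def by blast
  obtain q where q: "lead_coeff q = 1" "poly (map_poly of_int q) y = 0" using assms(2) aint_def by blast
  obtain d' where d': "degree p = Suc d'" using aint_degree[OF p] by blast
  obtain e' where e': "degree q = Suc e'" using aint_degree[OF q] by blast
  define d where "d = Suc d'"
  define e where "e = Suc e'"
  have "\<forall>k. \<exists>c::nat\<Rightarrow>int. x^k = (\<Sum>i<d. of_int (c i) * x^i)" using pow_red[OF p d'] d_def by blast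
  then obtain cx where cx: "\<And>k. x^k = (\<Sum>i<d. of_int (cx k i) * x^i)" by metis
  have "\<forall>k. \<exists>c::nat\<Rightarrow>int. y^k = (\<Sum>i<e. of_int (c i) * y^i)" using pow_red[OF q e'] e_def by blast
  then obtain cy where cy: "\<And>k. y^k = (\<Sum>i<e. of_int (cy k i) * y^i)" by metis
  have e0: "e > 0" unfolding e_def by simp
  define N where "N = d * e"
  define w where "w = vec N (\<lambda>k. x^(k div e) * y^(k mod e))"
  define M where "M = mat N N (\<lambda>(k,l). cx (k div e + 1) (l div e) * cy (k mod e + 1) (l mod e))"
  have M: "M \<in> carrier_mat N N" unfolding M_def by simp
  have w: "w \<in> carrier_vec N" unfolding w_def by simp
  have N0: "0 < N" unfolding N_def d_def e_def by simp
  have "w $ 0 = 1" using N0 unfolding w_def by simp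
  hence wnz: "w \<noteq> 0\<^sub>v N" using N0 by (metis index_zero_vec(1) zero_neq_one)
  have "map_mat of_int M *\<^sub>v w = (x*y) \<cdot>\<^sub>v w"
  proof (rule eq_vecI)
    fix k assume k: "k < dim_vec ((x*y) \<cdot>\<^sub>v w)"
    hence kN: "k < N" using w by simp
    have "(map_mat of_int M *\<^sub>v w) $ k = (\<Sum>l<N. of_int (M $$ (k,l)) * w $ l)"
      using kN M w by (simp add: scalar_prod_def atLeast0LessThan)
    also have "\<dots> = (\<Sum>l<d*e. (of_int (cx (k div e + 1) (l div e)) * x^(l div e)) * (of_int (cy (k mod e + 1) (l mod e)) * y^(l mod e)))"
      using kN unfolding N_def by (intro sum.cong) (auto simp: M_def w_def N_def)
    also have "\<dots> = (\<Sum>i<d. \<Sum>j<e. (of_int (cx (k div e + 1) i) * x^i) * (of_int (cy (k mod e + 1) j) * y^j))"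
      by (rule sum_div_mod[OF e0, where g = "\<lambda>i j. (of_int (cx (k div e + 1) i) * x^i) * (of_int (cy (k mod e + 1) j) * y^j)"])
    also have "\<dots> = (\<Sum>i<d. of_int (cx (k div e + 1) i) * x^i) * (\<Sum>j<e. of_int (cy (k mod e + 1) j) * y^j)"
      by (simp add: sum_product)
    also have "\<dots> = x^(k div e + 1) * y^(k mod e + 1)" by (simp only: cx[symmetric] cy[symmetric])
    also have "\<dots> = ((x*y) \<cdot>\<^sub>v w) $ k" using kN by (simp add: w_def algebra_simps)
    finally show "(map_mat of_int M *\<^sub>v w) $ k = ((x*y) \<cdot>\<^sub>v w) $ k" .
  qed (use M w in auto)
  then show ?thesis using eig_aint[OF M w wnz] by blast
qed



locale qsetup =
  fixes F :: "real set" and n :: nat and \<theta> :: "nat \<Rightarrow> real"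
  assumes rsub: "real_subfield F"
    and ib: "integral_basis F n \<theta>"
    and t0: "\<theta> 0 = 1"
    and n0: "0 < n"
begin

abbreviation "R \<equiv> ring_of_integers F"
abbreviation "zc \<equiv> zcoord n \<theta>"

lemma R_iff: "x \<in> R \<longleftrightarrow> x \<in> F \<and> aint x"
  unfolding ring_of_integers_def aint_def by auto

lemma R_mult: "x \<in> R \<Longrightarrow> y \<in> R \<Longrightarrow> x * y \<in> R"
  using rsub aint_mult unfolding R_iff real_subfield_def by blast

lemma theta_R: "i < n \<Longrightarrow> \<theta> i \<in> R"
  using ib unfolding integral_basis_def by blast

lemma zc_prop: assumes "x \<in> R"
  shows "(\<forall>k\<ge>n. zc x k = 0) \<and> x = (\<Sum>k<n. of_int (zc x k) * \<theta> k)"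
proof -
  have "\<exists>!c :: nat \<Rightarrow> int. (\<forall>k\<ge>n. c k = 0) \<and> x = (\<Sum>k<n. of_int (c k) * \<theta> k)"
    using ib assms unfolding integral_basis_def by blast
  then show ?thesis unfolding zcoord_def by (rule theI')
qed

lemma zc_zero: "x \<in> R \<Longrightarrow> k \<ge> n \<Longrightarrow> zc x k = 0"
  using zc_prop by blast

lemma zc_sum: "x \<in> R \<Longrightarrow> x = (\<Sum>k<n. of_int (zc x k) * \<theta> k)"
  using zc_prop by blast

lemma zc_uniq: assumes "x \<in> R" "\<forall>k\<ge>n. c k = 0" "x = (\<Sum>k<n. of_int (c k) * \<theta> k)"
  shows "zc x = c"
proof -
  have "\<exists>!c :: nat \<Rightarrow> int. (\<forall>k\<ge>n. c k = 0) \<and> x = (\<Sum>k<n. of_int (c k) * \<theta> k)"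
    using ib assms unfolding integral_basis_def by blast
  then show ?thesis using zc_prop[OF assms(1)] assms(2,3) by blast
qed

lemma zc_theta: assumes "j < n" shows "zc (\<theta> j) = (\<lambda>k. if k = j then 1 else 0)"
  by (rule zc_uniq) (use assms theta_R in \<open>auto simp: of_int_ind sum_delta_mul\<close>)

lemma one_R: "1 \<in> R" using theta_R[OF n0] t0 by simp

lemma zc_one: "zc 1 = (\<lambda>k. if k = 0 then 1 else 0)"
  using zc_theta[OF n0] t0 by simp

definition m :: "nat \<Rightarrow> nat \<Rightarrow> nat \<Rightarrow> int" where
  "m i j k = zc (\<theta> i * \<theta> j) k"

lemma m_sym: "m i j k = m j i k" unfolding m_def by (simp add: mult.commute)

lemma m_zero: "i < n \<Longrightarrow> j < n \<Longrightarrow> k \<ge> n \<Longrightarrow> m i j k = 0"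
  unfolding m_def by (rule zc_zero) (auto intro!: R_mult theta_R)

lemma m_expand: "i < n \<Longrightarrow> j < n \<Longrightarrow> \<theta> i * \<theta> j = (\<Sum>k<n. of_int (m i j k) * \<theta> k)"
  unfolding m_def by (rule zc_sum) (auto intro!: R_mult theta_R)

lemma zc_mult: assumes x: "x \<in> R" and y: "y \<in> R"
  shows "zc (x * y) k = (\<Sum>l<n. \<Sum>p<n. zc x l * zc y p * m l p k)"
proof -
  define c where "c = (\<lambda>k. \<Sum>l<n. \<Sum>p<n. zc x l * zc y p * m l p k)"
  have "x * y = (\<Sum>l<n. of_int (zc x l) * \<theta> l) * (\<Sum>p<n. of_int (zc y p) * \<theta> p)"
    using zc_sum[OF x] zc_sum[OF y] by simp
  also have "\<dots> = (\<Sum>l<n. \<Sum>p<n. of_int (zc x l) * of_int (zc y p) * (\<theta> l * \<theta> p))"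
    by (simp add: sum_product algebra_simps)
  also have "\<dots> = (\<Sum>l<n. \<Sum>p<n. of_int (zc x l) * of_int (zc y p) * (\<Sum>k<n. of_int (m l p k) * \<theta> k))"
    by (intro sum.cong refl) (simp add: m_expand)
  also have "\<dots> = (\<Sum>l<n. \<Sum>p<n. \<Sum>k<n. of_int (zc x l * zc y p * m l p k) * \<theta> k)"
    by (simp add: sum_distrib_left algebra_simps)
  also have "\<dots> = (\<Sum>k<n. of_int (c k) * \<theta> k)"
    unfolding c_def of_int_sum sum_distrib_right
    by (subst sum.swap, rule sum.cong, simp, subst sum.swap, simp)
  finally have e: "x * y = (\<Sum>k<n. of_int (c k) * \<theta> k)" .
  have z: "\<forall>k\<ge>n. c k = 0" unfolding c_def by (auto simp: m_zero)
  have "zc (x * y) = c" by (rule zc_uniq[OF R_mult[OF x y] z e])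
  then show ?thesis unfolding c_def by simp
qed

lemma m_assoc: assumes "i < n" "j < n" "l < n"
  shows "(\<Sum>p<n. m i j p * m p l k) = (\<Sum>p<n. m j l p * m i p k)"
proof -
  have Rij: "\<theta> i * \<theta> j \<in> R" and Rjl: "\<theta> j * \<theta> l \<in> R" using assms by (auto intro!: R_mult theta_R)
  have "zc (\<theta> i * \<theta> j * \<theta> l) k = (\<Sum>p<n. \<Sum>q<n. m i j p * (if q = l then 1 else 0) * m p q k)"
    using zc_mult[OF Rij theta_R[OF assms(3)]] zc_theta[OF assms(3)] unfolding m_def by simp
  also have "\<dots> = (\<Sum>p<n. m i j p * m p l k)" using assms by (simp add: mult.commute[of "m i j _"] mult.assoc sum_delta_mul)
  finally have 1: "zc (\<theta> i * \<theta> j * \<theta> l) k = (\<Sum>p<n. m i j p * m p l k)" .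
  have "zc (\<theta> i * (\<theta> j * \<theta> l)) k = (\<Sum>p<n. \<Sum>q<n. (if p = i then 1 else 0) * m j l q * m p q k)"
    using zc_mult[OF theta_R[OF assms(1)] Rjl] zc_theta[OF assms(1)] unfolding m_def by simp
  also have "\<dots> = (\<Sum>q<n. m j l q * m i q k)" using assms by (simp add: sum.swap[of _ "{..<n}" "{..<n}"] mult.assoc sum_delta_mul)
  finally have 2: "zc (\<theta> i * (\<theta> j * \<theta> l)) k = (\<Sum>q<n. m j l q * m i q k)" .
  show ?thesis using 1 2 by (simp add: mult.assoc)
qed

lemma m_one: "j < n \<Longrightarrow> m 0 j k = (if k = j then 1 else 0)"
  unfolding m_def using t0 zc_theta by simp

end



lemma swapA: "(\<Sum>p\<in>A. \<Sum>l\<in>B. \<Sum>i\<in>C. \<Sum>j\<in>D. f p l i j) = (\<Sum>i\<in>C. \<Sum>j\<in>D. \<Sum>l\<in>B. \<Sum>p\<in>A. (f p l i j :: 'a::comm_monoid_add))"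
proof -
  have "(\<Sum>p\<in>A. \<Sum>l\<in>B. \<Sum>i\<in>C. \<Sum>j\<in>D. f p l i j) = (\<Sum>p\<in>A. \<Sum>i\<in>C. \<Sum>l\<in>B. \<Sum>j\<in>D. f p l i j)"
    by (rule sum.cong[OF refl], rule sum.swap)
  also have "\<dots> = (\<Sum>p\<in>A. \<Sum>i\<in>C. \<Sum>j\<in>D. \<Sum>l\<in>B. f p l i j)"
    by (rule sum.cong[OF refl], rule sum.cong[OF refl], rule sum.swap)
  also have "\<dots> = (\<Sum>i\<in>C. \<Sum>p\<in>A. \<Sum>j\<in>D. \<Sum>l\<in>B. f p l i j)" by (rule sum.swap)
  also have "\<dots> = (\<Sum>i\<in>C. \<Sum>j\<in>D. \<Sum>p\<in>A. \<Sum>l\<in>B. f p l i j)"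
    by (rule sum.cong[OF refl], rule sum.swap)
  also have "\<dots> = (\<Sum>i\<in>C. \<Sum>j\<in>D. \<Sum>l\<in>B. \<Sum>p\<in>A. f p l i j)"
    by (rule sum.cong[OF refl], rule sum.cong[OF refl], rule sum.swap)
  finally show ?thesis .
qed

lemma swapB: "(\<Sum>i\<in>C. \<Sum>p\<in>A. \<Sum>j\<in>D. \<Sum>l\<in>B. g i p j l) = (\<Sum>i\<in>C. \<Sum>j\<in>D. \<Sum>l\<in>B. \<Sum>p\<in>A. (g i p j l :: 'a::comm_monoid_add))"
proof -
  have "(\<Sum>i\<in>C. \<Sum>p\<in>A. \<Sum>j\<in>D. \<Sum>l\<in>B. g i p j l) = (\<Sum>i\<in>C. \<Sum>j\<in>D. \<Sum>p\<in>A. \<Sum>l\<in>B. g i p j l)"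
    by (rule sum.cong[OF refl], rule sum.swap)
  also have "\<dots> = (\<Sum>i\<in>C. \<Sum>j\<in>D. \<Sum>l\<in>B. \<Sum>p\<in>A. g i p j l)"
    by (rule sum.cong[OF refl], rule sum.cong[OF refl], rule sum.swap)
  finally show ?thesis .
qed

context qsetup
begin

definition MM :: "nat \<Rightarrow> nat \<Rightarrow> nat \<Rightarrow> complex" where "MM i j k = of_int (m i j k)"
definition mul :: "(nat \<Rightarrow> complex) \<Rightarrow> (nat \<Rightarrow> complex) \<Rightarrow> nat \<Rightarrow> complex" where
  "mul u w = (\<lambda>k. \<Sum>i<n. \<Sum>j<n. MM i j k * u i * w j)"
definition e0 :: "nat \<Rightarrow> complex" where "e0 = (\<lambda>k. if k = 0 then 1 else 0)"
definition Vn :: "(nat \<Rightarrow> complex) set" where "Vn = {u. \<forall>k\<ge>n. u k = 0}"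
definition cc :: "real \<Rightarrow> nat \<Rightarrow> complex" where "cc c = (\<lambda>l. of_int (zc c l))"

lemma MM_assoc: "i < n \<Longrightarrow> j < n \<Longrightarrow> l < n \<Longrightarrow>
   (\<Sum>p<n. MM i j p * MM p l k) = (\<Sum>p<n. MM j l p * MM i p k)"
  unfolding MM_def using m_assoc[of i j l k] by (metis (no_types, lifting) of_int_mult of_int_sum sum.cong)

lemma mul_Vn: "mul u w \<in> Vn"
  unfolding Vn_def mul_def MM_def by (auto simp: m_zero)

lemma e0_Vn: "e0 \<in> Vn" unfolding Vn_def e0_def using n0 by auto

lemma mul_comm: "mul u w = mul w u"
  unfolding mul_def MM_def
  by (rule ext, subst sum.swap, intro sum.cong refl) (simp add: m_sym[of _ _] algebra_simps)

lemma mul_one: "u \<in> Vn \<Longrightarrow> mul e0 u = u"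
proof (rule ext)
  fix k assume u: "u \<in> Vn"
  have "mul e0 u k = (\<Sum>i<n. if i = 0 then (\<Sum>j<n. MM 0 j k * u j) else 0)" unfolding mul_def
    by (intro sum.cong) (auto simp: e0_def)
  also have "\<dots> = (\<Sum>j<n. MM 0 j k * u j)" using n0 by (simp add: sum.delta')
  also have "\<dots> = (\<Sum>j<n. (if k = j then 1 else 0) * u j)"
    by (intro sum.cong refl) (simp add: MM_def m_one)
  also have "\<dots> = u k" using u unfolding Vn_def by (auto simp: sum_delta_mul eq_commute[of k])
  finally show "mul e0 u k = u k" .
qed

lemma mul_assoc: "mul (mul u w) s = mul u (mul w s)"
proof (rule ext)
  fix k
  have "mul (mul u w) s k = (\<Sum>p<n. \<Sum>l<n. \<Sum>i<n. \<Sum>j<n. MM p l k * (MM i j p * u i * w j) * s l)"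
    unfolding mul_def by (simp add: sum_distrib_left sum_distrib_right)
  also have "\<dots> = (\<Sum>i<n. \<Sum>j<n. \<Sum>l<n. \<Sum>p<n. MM p l k * (MM i j p * u i * w j) * s l)"
    by (rule swapA)
  also have "\<dots> = (\<Sum>i<n. \<Sum>j<n. \<Sum>l<n. (u i * w j * s l) * (\<Sum>p<n. MM i j p * MM p l k))"
    by (simp add: sum_distrib_left algebra_simps)
  also have "\<dots> = (\<Sum>i<n. \<Sum>j<n. \<Sum>l<n. (u i * w j * s l) * (\<Sum>p<n. MM j l p * MM i p k))"
    by (intro sum.cong refl) (simp add: MM_assoc)
  also have "\<dots> = (\<Sum>i<n. \<Sum>j<n. \<Sum>l<n. \<Sum>p<n. MM i p k * u i * (MM j l p * w j * s l))"
    by (simp add: sum_distrib_left algebra_simps)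
  also have "\<dots> = (\<Sum>i<n. \<Sum>p<n. \<Sum>j<n. \<Sum>l<n. MM i p k * u i * (MM j l p * w j * s l))"
    by (rule swapB[symmetric])
  also have "\<dots> = mul u (mul w s) k"
    unfolding mul_def by (simp add: sum_distrib_left sum_distrib_right)
  finally show "mul (mul u w) s k = mul u (mul w s) k" .
qed

lemma mul_add_left: "mul (\<lambda>k. u k + w k) s = (\<lambda>k. mul u s k + mul w s k)"
  unfolding mul_def by (auto simp: algebra_simps sum.distrib)

lemma mul_scale_left: "mul (\<lambda>k. c * u k) s = (\<lambda>k. c * mul u s k)"
  unfolding mul_def by (auto simp: algebra_simps sum_distrib_left)

definition AR :: "(nat \<Rightarrow> complex) ring" where
  "AR = \<lparr>carrier = Vn, monoid.mult = mul, one = e0, zero = (\<lambda>_. 0), add = (\<lambda>u w k. u k + w k)\<rparr>"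

lemma AR_cring: "cring AR"
proof (rule cringI)
  show "abelian_group AR"
  proof (rule abelian_groupI)
    show "\<And>x. x \<in> carrier AR \<Longrightarrow> \<exists>y\<in>carrier AR. y \<oplus>\<^bsub>AR\<^esub> x = \<zero>\<^bsub>AR\<^esub>"
      by (rule_tac x="\<lambda>k. - x k" in bexI) (auto simp: AR_def Vn_def)
  qed (auto simp: AR_def Vn_def add_ac)
  show "comm_monoid AR"
  proof (rule comm_monoidI)
    fix x y z assume "x \<in> carrier AR" "y \<in> carrier AR" "z \<in> carrier AR"
    show "x \<otimes>\<^bsub>AR\<^esub> y \<otimes>\<^bsub>AR\<^esub> z = x \<otimes>\<^bsub>AR\<^esub> (y \<otimes>\<^bsub>AR\<^esub> z)"
      by (simp add: AR_def mul_assoc)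
  next
    fix x y show "x \<otimes>\<^bsub>AR\<^esub> y = y \<otimes>\<^bsub>AR\<^esub> x" by (simp add: AR_def mul_comm[of x y])
  qed (auto simp: AR_def mul_Vn e0_Vn mul_one)
qed (simp add: AR_def mul_add_left)

lemma AR_simps: "carrier AR = Vn" "x \<otimes>\<^bsub>AR\<^esub> y = mul x y" "\<one>\<^bsub>AR\<^esub> = e0" "\<zero>\<^bsub>AR\<^esub> = (\<lambda>_. 0)"
  "x \<oplus>\<^bsub>AR\<^esub> y = (\<lambda>k. x k + y k)"
  by (auto simp: AR_def)

lemma AR_minus: assumes "x \<in> Vn" shows "\<ominus>\<^bsub>AR\<^esub> x = (\<lambda>k. - x k)"
proof -
  interpret cring AR by (rule AR_cring)
  show ?thesis by (rule minus_equality) (use assms in \<open>auto simp: AR_simps Vn_def\<close>)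
qed

lemma (in cring) t1:
  assumes c: "\<alpha> \<in> carrier R" "\<beta> \<in> carrier R" "Y \<in> carrier R" "Z \<in> carrier R" "T \<in> carrier R" "s \<in> carrier R"
  shows "\<alpha> \<otimes> ((s \<otimes> Y) \<otimes> (s \<otimes> Y)) \<oplus> \<beta> \<otimes> ((s \<otimes> Z) \<otimes> (s \<otimes> Z)) \<ominus> (\<alpha> \<otimes> \<beta>) \<otimes> ((s \<otimes> T) \<otimes> (s \<otimes> T))
    = (s \<otimes> s) \<otimes> (\<alpha> \<otimes> (Y \<otimes> Y) \<oplus> \<beta> \<otimes> (Z \<otimes> Z) \<ominus> (\<alpha> \<otimes> \<beta>) \<otimes> (T \<otimes> T))"
  using c by (simp add: r_distr r_minus minus_eq m_ac)
lemma (in cring) t2: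
  assumes c: "Q \<in> carrier R" "r \<in> carrier R"
  shows "\<one> \<otimes> (((\<one> \<oplus> Q) \<otimes> r) \<otimes> ((\<one> \<oplus> Q) \<otimes> r)) \<ominus> (((\<one> \<oplus> \<one>) \<otimes> r) \<otimes> ((\<one> \<oplus> \<one>) \<otimes> r)) \<otimes> Q = ((\<one> \<ominus> Q) \<otimes> r) \<otimes> ((\<one> \<ominus> Q) \<otimes> r)"
  using c by (simp add: r_distr l_distr r_minus l_minus minus_eq m_ac a_ac minus_add r_neg1 r_neg2)
lemma (in cring) t3:
  assumes c: "A \<in> carrier R" "B \<in> carrier R" "C \<in> carrier R" "D \<in> carrier R"
  shows "A \<ominus> B \<ominus> C \<oplus> D = A \<ominus> (B \<oplus> C \<ominus> D)"
  using c by (simp add: minus_eq minus_add a_ac minus_minus)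

lemma (in cring) quat_identity:
  assumes c: "\<alpha> \<in> carrier R" "\<beta> \<in> carrier R" "Y \<in> carrier R" "Z \<in> carrier R" "T \<in> carrier R" "r \<in> carrier R"
    and Q: "Q = \<alpha> \<otimes> (Y \<otimes> Y) \<oplus> \<beta> \<otimes> (Z \<otimes> Z) \<ominus> (\<alpha> \<otimes> \<beta>) \<otimes> (T \<otimes> T)"
    and inv: "(\<one> \<ominus> Q) \<otimes> r = \<one>"
    and x: "x = (\<one> \<oplus> Q) \<otimes> r" and y: "y = ((\<one> \<oplus> \<one>) \<otimes> r) \<otimes> Y"
    and z: "z = ((\<one> \<oplus> \<one>) \<otimes> r) \<otimes> Z" and t: "t = ((\<one> \<oplus> \<one>) \<otimes> r) \<otimes> T"
  shows "\<one> \<otimes> (x \<otimes> x) \<ominus> \<alpha> \<otimes> (y \<otimes> y) \<ominus> \<beta> \<otimes> (z \<otimes> z) \<oplus> (\<alpha> \<otimes> \<beta>) \<otimes> (t \<otimes> t) = \<one>"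
proof -
  have Qc: "Q \<in> carrier R" using c Q by simp
  have sc: "(\<one> \<oplus> \<one>) \<otimes> r \<in> carrier R" using c by simp
  have 1: "\<alpha> \<otimes> (y \<otimes> y) \<oplus> \<beta> \<otimes> (z \<otimes> z) \<ominus> (\<alpha> \<otimes> \<beta>) \<otimes> (t \<otimes> t) = (((\<one> \<oplus> \<one>) \<otimes> r) \<otimes> ((\<one> \<oplus> \<one>) \<otimes> r)) \<otimes> Q"
    unfolding y z t Q using t1[OF c(1-5) sc] .
  have "\<one> \<otimes> (x \<otimes> x) \<ominus> \<alpha> \<otimes> (y \<otimes> y) \<ominus> \<beta> \<otimes> (z \<otimes> z) \<oplus> (\<alpha> \<otimes> \<beta>) \<otimes> (t \<otimes> t)
     = \<one> \<otimes> (x \<otimes> x) \<ominus> (\<alpha> \<otimes> (y \<otimes> y) \<oplus> \<beta> \<otimes> (z \<otimes> z) \<ominus> (\<alpha> \<otimes> \<beta>) \<otimes> (t \<otimes> t))"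
    by (rule t3) (use c Qc in \<open>simp_all add: x y z t\<close>)
  also have "\<dots> = ((\<one> \<ominus> Q) \<otimes> r) \<otimes> ((\<one> \<ominus> Q) \<otimes> r)" unfolding 1 x using t2[OF Qc c(6)] .
  also have "\<dots> = \<one>" using inv by simp
  finally show ?thesis .
qed

lemma (in cring) sep_identity:
  assumes c: "Q \<in> carrier R" "Y \<in> carrier R" "r \<in> carrier R" "E \<in> carrier R" "s \<in> carrier R"
    and inv: "(\<one> \<ominus> Q) \<otimes> r = \<one>"
    and x: "x = (\<one> \<oplus> Q) \<otimes> r" and y: "y = ((\<one> \<oplus> \<one>) \<otimes> r) \<otimes> Y"
    and E: "(x \<oplus> \<one>) \<otimes> E = s"
  shows "y \<otimes> E = Y \<otimes> s"
proof -
  have "x \<oplus> \<one> = x \<oplus> (\<one> \<ominus> Q) \<otimes> r" using inv by simp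
  also have "\<dots> = (\<one> \<oplus> \<one>) \<otimes> r" unfolding x using c by algebra
  finally have "x \<oplus> \<one> = (\<one> \<oplus> \<one>) \<otimes> r" .
  then have "y \<otimes> E = Y \<otimes> ((x \<oplus> \<one>) \<otimes> E)" unfolding y using c by (simp add: m_ac)
  then show ?thesis using E by simp
qed

end



lemma pf_c: "(\<lambda>_. c) \<in> polyfun N" by (rule pf_const)
lemma pf_v: "i < N \<Longrightarrow> (\<lambda>v. v i) \<in> polyfun N" by (rule pf_var)
lemma pf_a: "f \<in> polyfun N \<Longrightarrow> g \<in> polyfun N \<Longrightarrow> (\<lambda>v. f v + g v) \<in> polyfun N" by (rule pf_add)
lemma pf_m: "f \<in> polyfun N \<Longrightarrow> g \<in> polyfun N \<Longrightarrow> (\<lambda>v. f v * g v) \<in> polyfun N" by (rule pf_mult)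
lemma pf_cm: "f \<in> polyfun N \<Longrightarrow> (\<lambda>v. c * f v) \<in> polyfun N" using pf_m[OF pf_c] .
lemma pf_neg: "f \<in> polyfun N \<Longrightarrow> (\<lambda>v. - f v) \<in> polyfun N" using pf_cm[of f N "-1"] by simp
lemma pf_d: "f \<in> polyfun N \<Longrightarrow> g \<in> polyfun N \<Longrightarrow> (\<lambda>v. f v - g v) \<in> polyfun N"
  using pf_a[OF _ pf_neg] by simp
lemma pf_sum: "finite A \<Longrightarrow> (\<And>i. i \<in> A \<Longrightarrow> f i \<in> polyfun N) \<Longrightarrow> (\<lambda>v. \<Sum>i\<in>A. f i v) \<in> polyfun N"
proof (induction A rule: finite_induct)
  case empty then show ?case by (simp add: pf_c)
next
  case (insert x F) then show ?case by (simp add: pf_a)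
qed
lemma pf_prod: "finite A \<Longrightarrow> (\<And>i. i \<in> A \<Longrightarrow> f i \<in> polyfun N) \<Longrightarrow> (\<lambda>v. \<Prod>i\<in>A. f i v) \<in> polyfun N"
proof (induction A rule: finite_induct)
  case empty then show ?case by (simp add: pf_c)
next
  case (insert x F) then show ?case by (simp add: pf_m)
qed
lemma pf_pow: "f \<in> polyfun N \<Longrightarrow> (\<lambda>v. f v ^ k) \<in> polyfun N"
  by (induction k) (simp_all add: pf_c pf_m)
lemma pf_if: "f \<in> polyfun N \<Longrightarrow> g \<in> polyfun N \<Longrightarrow> (\<lambda>v. if P then f v else g v) \<in> polyfun N"
  by (cases P) simp_all

lemma pf_holo: "f \<in> polyfun N \<Longrightarrow> (\<lambda>c. f (v(i:=c))) holomorphic_on S"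
proof (induction rule: polyfun.induct)
  case (pf_var j) then show ?case by (cases "j = i") (auto intro!: holomorphic_intros)
qed (auto intro!: holomorphic_intros)

lemma pf_det:
  assumes "\<And>v. A v \<in> carrier_mat d d" "\<And>a b. a < d \<Longrightarrow> b < d \<Longrightarrow> (\<lambda>v. A v $$ (a,b)) \<in> polyfun N"
  shows "(\<lambda>v. det (A v)) \<in> polyfun N"
proof -
  have "(\<lambda>v. \<Sum>p\<in>{p. p permutes {0..<d}}. signof p * (\<Prod>i = 0..<d. A v $$ (i, p i))) \<in> polyfun N"
  proof (rule pf_sum)
    show "finite {p. p permutes {0..<d}}" by (rule finite_permutations) simp
  next
    fix p assume "p \<in> {p. p permutes {0..<d}}"
    hence p: "p permutes {0..<d}" by simp
    have pi: "\<And>i. i < d \<Longrightarrow> p i < d" using permutes_in_image[OF p] by auto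
    show "(\<lambda>v. signof p * (\<Prod>i = 0..<d. A v $$ (i, p i))) \<in> polyfun N"
      by (rule pf_cm, rule pf_prod) (auto intro!: assms(2) pi)
  qed
  then show ?thesis using det_def'[OF assms(1)] by simp
qed

definition pvec :: "nat \<Rightarrow> ((nat \<Rightarrow> complex) \<Rightarrow> nat \<Rightarrow> complex) \<Rightarrow> bool" where
  "pvec N u \<longleftrightarrow> (\<forall>k. (\<lambda>v. u v k) \<in> polyfun N)"

lemma pvecD: "pvec N u \<Longrightarrow> (\<lambda>v. u v k) \<in> polyfun N" unfolding pvec_def by blast

lemma pvec_const: "pvec N (\<lambda>v. c)" unfolding pvec_def by (simp add: pf_c)
lemma pvec_add: "pvec N u \<Longrightarrow> pvec N w \<Longrightarrow> pvec N (\<lambda>v k. u v k + w v k)"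
  unfolding pvec_def by (simp add: pf_a)
lemma pvec_sub: "pvec N u \<Longrightarrow> pvec N w \<Longrightarrow> pvec N (\<lambda>v k. u v k - w v k)"
  unfolding pvec_def by (simp add: pf_d)
lemma pvec_cm: "pvec N u \<Longrightarrow> pvec N (\<lambda>v k. c * u v k)"
  unfolding pvec_def by (simp add: pf_cm)
lemma pvec_block: "pvec N (\<lambda>v i. if i < n then v (s + i) else 0)" if "s + n \<le> N" for s n
  unfolding pvec_def
proof
  fix k show "(\<lambda>v. if k < n then v (s + k) else 0) \<in> polyfun N"
    by (cases "k < n") (use that in \<open>auto intro!: pf_v pf_c\<close>)
qed

context qsetup
begin

definition Lm :: "(nat \<Rightarrow> complex) \<Rightarrow> complex mat" where
  "Lm w = mat n n (\<lambda>(k,j). \<Sum>i<n. MM i j k * w i)"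
definition Dt :: "(nat \<Rightarrow> complex) \<Rightarrow> complex" where "Dt w = det (Lm w)"
definition Ad :: "(nat \<Rightarrow> complex) \<Rightarrow> nat \<Rightarrow> complex" where
  "Ad w = (\<lambda>k. if k < n then adj_mat (Lm w) $$ (k, 0) else 0)"

lemma Lm_carrier: "Lm w \<in> carrier_mat n n" unfolding Lm_def by simp

lemma pvec_mul: "pvec N u \<Longrightarrow> pvec N w \<Longrightarrow> pvec N (\<lambda>v. mul (u v) (w v))"
  unfolding pvec_def mul_def by (auto intro!: pf_sum pf_m pf_c)

lemma pf_Dt: assumes "pvec N u" shows "(\<lambda>v. Dt (u v)) \<in> polyfun N"
  unfolding Dt_def
  by (rule pf_det[OF Lm_carrier]) (use assms in \<open>auto simp: Lm_def pvec_def intro!: pf_sum pf_m pf_c\<close>)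

lemma pvec_Ad: assumes "pvec N u" shows "pvec N (\<lambda>v. Ad (u v))"
  unfolding pvec_def
proof
  fix k
  show "(\<lambda>v. Ad (u v) k) \<in> polyfun N"
  proof (cases "k < n")
    case True
    have e: "Ad (u v) k = (-1)^(k) * det (mat_delete (Lm (u v)) 0 k)" for v
      using True n0 unfolding Ad_def adj_mat_def cofactor_def by (simp add: Lm_def)
    have c: "mat_delete (Lm (u v)) 0 k \<in> carrier_mat (n-1) (n-1)" for v
      by (rule mat_delete_carrier[OF Lm_carrier])
    have "(\<lambda>v. det (mat_delete (Lm (u v)) 0 k)) \<in> polyfun N"
      by (rule pf_det[OF c]) (use assms in \<open>auto simp: mat_delete_def Lm_def pvec_def intro!: pf_sum pf_m pf_c\<close>)
    then show ?thesis unfolding e by (rule pf_cm)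
  qed (simp add: Ad_def pf_c)
qed

lemma cramer: "mul w (Ad w) = (\<lambda>k. Dt w * e0 k)"
proof (rule ext)
  fix k
  show "mul w (Ad w) k = Dt w * e0 k"
  proof (cases "k < n")
    case True
    have "mul w (Ad w) k = (\<Sum>j<n. (\<Sum>i<n. MM i j k * w i) * adj_mat (Lm w) $$ (j, 0))"
      unfolding mul_def Ad_def by (subst sum.swap) (auto simp: sum_distrib_right intro!: sum.cong)
    also have "\<dots> = (Lm w * adj_mat (Lm w)) $$ (k, 0)"
      using True n0 adj_mat(1)[OF Lm_carrier[of w]]
      by (simp add: scalar_prod_def Lm_def atLeast0LessThan)
    also have "\<dots> = Dt w * e0 k"
      using adj_mat(2)[OF Lm_carrier[of w]] True n0 by (simp add: Dt_def e0_def)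
    finally show ?thesis .
  next
    case False
    then show ?thesis using mul_Vn[of w "Ad w"] n0 by (simp add: Vn_def e0_def)
  qed
qed

lemma Lm_e0: "Lm e0 = 1\<^sub>m n"
proof (rule eq_matI)
  fix i j assume ij: "i < dim_row (1\<^sub>m n)" "j < dim_col (1\<^sub>m n)"
  have "(\<Sum>l<n. MM l j i * e0 l) = MM 0 j i" using n0 by (simp add: e0_def mult.commute[of "MM _ _ _"] sum_delta_mul)
  then show "Lm e0 $$ (i, j) = 1\<^sub>m n $$ (i, j)" using ij by (simp add: Lm_def MM_def m_one)
qed (auto simp: Lm_def)

lemma Dt_e0: "Dt e0 = 1" unfolding Dt_def Lm_e0 by simp

lemma mul_zero: "mul u (\<lambda>_. 0) = (\<lambda>_. 0)" unfolding mul_def by simp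

lemma Dt_nonzero: assumes "mul w' w = e0" shows "Dt w \<noteq> 0"
proof
  assume "Dt w = 0"
  then obtain x where x: "x \<in> carrier_vec n" "x \<noteq> 0\<^sub>v n" "Lm w *\<^sub>v x = 0\<^sub>v n"
    using det_0_iff_vec_prod_zero[OF Lm_carrier[of w]] unfolding Dt_def by blast
  define xs where "xs = (\<lambda>k. if k < n then x $ k else 0)"
  have xs: "xs \<in> Vn" unfolding xs_def Vn_def by simp
  have "mul w xs = (\<lambda>_. 0)"
  proof (rule ext)
    fix k show "mul w xs k = 0"
    proof (cases "k < n")
      case True
      have "mul w xs k = (\<Sum>j<n. (\<Sum>i<n. MM i j k * w i) * x $ j)"
        unfolding mul_def xs_def by (subst sum.swap) (auto simp: sum_distrib_right intro!: sum.cong)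
      also have "\<dots> = (Lm w *\<^sub>v x) $ k" using True x(1) by (simp add: scalar_prod_def Lm_def atLeast0LessThan)
      finally show ?thesis using x(3) True by simp
    next
      case False then show ?thesis using mul_Vn[of w xs] by (simp add: Vn_def)
    qed
  qed
  then have "xs = (\<lambda>_. 0)" using mul_one[OF xs] assms mul_assoc[of w' w xs] mul_zero by metis
  then have "x = 0\<^sub>v n"
  proof (intro eq_vecI)
    fix i assume "xs = (\<lambda>_. 0)" "i < dim_vec (0\<^sub>v n)"
    then have "xs i = 0" "i < n" by auto
    then show "x $ i = 0\<^sub>v n $ i" unfolding xs_def by simp
  qed (use x(1) in auto)
  then show False using x(2) by simp
qed

end



definition good :: "((nat \<Rightarrow> complex) \<Rightarrow> complex) \<Rightarrow> bool" where
  "good h \<longleftrightarrow> (\<forall>v i. (\<lambda>c. h (v(i:=c))) holomorphic_on UNIV)"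

definition SK :: "nat set \<Rightarrow> (nat \<Rightarrow> complex) \<Rightarrow> (nat \<Rightarrow> complex) set" where
  "SK K v0 = {v. \<forall>i. i \<notin> K \<longrightarrow> v i = v0 i}"

lemma good_mult: "good f \<Longrightarrow> good g \<Longrightarrow> good (\<lambda>v. f v * g v)"
  unfolding good_def by (auto intro!: holomorphic_intros)

lemma domain_lemma:
  assumes "finite K" "good h1" "good h2"
  shows "(\<forall>v\<in>SK K v0. h1 v * h2 v = 0) \<longrightarrow> (\<forall>v\<in>SK K v0. h1 v = 0) \<or> (\<forall>v\<in>SK K v0. h2 v = 0)"
  using assms(1)
proof (induction K arbitrary: v0 rule: finite_induct)
  case empty
  have "SK {} v0 = {v0}" unfolding SK_def by auto
  then show ?case by auto
next
  case (insert k K)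
  show ?case
  proof
    assume H: "\<forall>v\<in>SK (insert k K) v0. h1 v * h2 v = 0"
    define Z1 where "Z1 = {c. \<forall>v\<in>SK K (v0(k:=c)). h1 v = 0}"
    define Z2 where "Z2 = {c. \<forall>v\<in>SK K (v0(k:=c)). h2 v = 0}"
    have sub: "SK K (v0(k:=c)) \<subseteq> SK (insert k K) v0" for c unfolding SK_def by auto
    have "c \<in> Z1 \<union> Z2" for c
      using insert.IH[of "v0(k:=c)"] H sub[of c] unfolding Z1_def Z2_def by blast
    then have "Z1 \<union> Z2 = UNIV" by blast
    then have lim: "(0::complex) islimpt Z1 \<or> 0 islimpt Z2" using islimpt_Un[of 0 Z1 Z2] by simp
    have key: "\<forall>v\<in>SK (insert k K) v0. h v = 0"
      if Z: "0 islimpt Z" and hZ: "Z = {c. \<forall>v\<in>SK K (v0(k:=c)). h v = 0}" and g: "good h" for h Z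
    proof
      fix v assume v: "v \<in> SK (insert k K) v0"
      have "(\<lambda>c. h (v(k:=c))) (v k) = 0"
      proof (rule analytic_continuation[where f="\<lambda>c. h (v(k:=c))" and w="v k" and S=UNIV and U=Z and \<xi>=0])
        show "(\<lambda>c. h (v(k:=c))) holomorphic_on UNIV" using g unfolding good_def by blast
        fix c assume "c \<in> Z"
        moreover have "v(k:=c) \<in> SK K (v0(k:=c))" using v insert.hyps(2) unfolding SK_def by auto
        ultimately show "h (v(k:=c)) = 0" using hZ by blast
      qed (use Z in auto)
      then show "h v = 0" by simp
    qed
    show "(\<forall>v\<in>SK (insert k K) v0. h1 v = 0) \<or> (\<forall>v\<in>SK (insert k K) v0. h2 v = 0)"
      using lim
    proof
      assume "0 islimpt Z1"
      then show ?thesis using key[OF _ Z1_def assms(2)] by blast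
    next
      assume "0 islimpt Z2"
      then show ?thesis using key[OF _ Z2_def assms(3)] by blast
    qed
  qed
qed

lemma coord_carrier: "x \<in> carrier (coord_ring N A) \<longleftrightarrow> (\<exists>f\<in>polyfun N. x = restrict f A)"
  unfolding coord_ring_def by auto

lemma coord_simps: "x \<otimes>\<^bsub>coord_ring N A\<^esub> y = restrict (\<lambda>v. x v * y v) A"
  "x \<oplus>\<^bsub>coord_ring N A\<^esub> y = restrict (\<lambda>v. x v + y v) A"
  "\<one>\<^bsub>coord_ring N A\<^esub> = restrict (\<lambda>_. 1) A"
  "\<zero>\<^bsub>coord_ring N A\<^esub> = restrict (\<lambda>_. 0) A"
  unfolding coord_ring_def by auto

lemma coord_cring: "cring (coord_ring N A)"
proof (rule cringI)
  show "abelian_group (coord_ring N A)"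
  proof (rule abelian_groupI)
    fix x y assume "x \<in> carrier (coord_ring N A)" "y \<in> carrier (coord_ring N A)"
    then obtain f g where "f \<in> polyfun N" "g \<in> polyfun N" "x = restrict f A" "y = restrict g A"
      by (auto simp: coord_carrier)
    then show "x \<oplus>\<^bsub>coord_ring N A\<^esub> y \<in> carrier (coord_ring N A)" unfolding coord_simps coord_carrier
      by (intro bexI[of _ "\<lambda>v. f v + g v"]) (auto intro: pf_add)
  next
    show "\<zero>\<^bsub>coord_ring N A\<^esub> \<in> carrier (coord_ring N A)" unfolding coord_simps coord_carrier
      by (auto intro: pf_const)
  next
    fix x y z show "x \<oplus>\<^bsub>coord_ring N A\<^esub> y \<oplus>\<^bsub>coord_ring N A\<^esub> z = x \<oplus>\<^bsub>coord_ring N A\<^esub> (y \<oplus>\<^bsub>coord_ring N A\<^esub> z)"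
      unfolding coord_simps by (auto simp: restrict_def add.assoc)
  next
    fix x y show "x \<oplus>\<^bsub>coord_ring N A\<^esub> y = y \<oplus>\<^bsub>coord_ring N A\<^esub> x"
      unfolding coord_simps by (auto simp: restrict_def add.commute)
  next
    fix x assume "x \<in> carrier (coord_ring N A)"
    then obtain f where "f \<in> polyfun N" "x = restrict f A" by (auto simp: coord_carrier)
    then show "\<zero>\<^bsub>coord_ring N A\<^esub> \<oplus>\<^bsub>coord_ring N A\<^esub> x = x"
      unfolding coord_simps by (auto simp: restrict_def)
  next
    fix x assume "x \<in> carrier (coord_ring N A)"
    then obtain f where f: "f \<in> polyfun N" "x = restrict f A" by (auto simp: coord_carrier)
    have "(\<lambda>v. - f v) \<in> polyfun N" using pf_mult[OF pf_const[of "-1"] f(1)] by simp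
    then have mem: "restrict (\<lambda>v. - f v) A \<in> carrier (coord_ring N A)" unfolding coord_carrier by blast
    show "\<exists>y\<in>carrier (coord_ring N A). y \<oplus>\<^bsub>coord_ring N A\<^esub> x = \<zero>\<^bsub>coord_ring N A\<^esub>"
      by (rule bexI[OF _ mem]) (auto simp: coord_simps restrict_def f(2))
  qed
  show "comm_monoid (coord_ring N A)"
  proof (rule comm_monoidI)
    fix x y assume "x \<in> carrier (coord_ring N A)" "y \<in> carrier (coord_ring N A)"
    then obtain f g where "f \<in> polyfun N" "g \<in> polyfun N" "x = restrict f A" "y = restrict g A"
      by (auto simp: coord_carrier)
    then show "x \<otimes>\<^bsub>coord_ring N A\<^esub> y \<in> carrier (coord_ring N A)" unfolding coord_simps coord_carrier
      by (intro bexI[of _ "\<lambda>v. f v * g v"]) (auto intro: pf_mult)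
  next
    show "\<one>\<^bsub>coord_ring N A\<^esub> \<in> carrier (coord_ring N A)" unfolding coord_simps coord_carrier
      by (auto intro: pf_const)
  next
    fix x y z show "x \<otimes>\<^bsub>coord_ring N A\<^esub> y \<otimes>\<^bsub>coord_ring N A\<^esub> z = x \<otimes>\<^bsub>coord_ring N A\<^esub> (y \<otimes>\<^bsub>coord_ring N A\<^esub> z)"
      unfolding coord_simps by (auto simp: restrict_def mult.assoc)
  next
    fix x assume "x \<in> carrier (coord_ring N A)"
    then obtain f where "f \<in> polyfun N" "x = restrict f A" by (auto simp: coord_carrier)
    then show "\<one>\<^bsub>coord_ring N A\<^esub> \<otimes>\<^bsub>coord_ring N A\<^esub> x = x"
      unfolding coord_simps by (auto simp: restrict_def)
  next
    fix x y show "x \<otimes>\<^bsub>coord_ring N A\<^esub> y = y \<otimes>\<^bsub>coord_ring N A\<^esub> x"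
      unfolding coord_simps by (auto simp: restrict_def mult.commute)
  qed
next
  fix x y z show "(x \<oplus>\<^bsub>coord_ring N A\<^esub> y) \<otimes>\<^bsub>coord_ring N A\<^esub> z = x \<otimes>\<^bsub>coord_ring N A\<^esub> z \<oplus>\<^bsub>coord_ring N A\<^esub> y \<otimes>\<^bsub>coord_ring N A\<^esub> z"
    unfolding coord_simps by (rule ext) (simp add: restrict_def distrib_right)
qed

lemma coord_minus: assumes "x \<in> carrier (coord_ring N A)"
  shows "\<ominus>\<^bsub>coord_ring N A\<^esub> x = restrict (\<lambda>v. - x v) A"
proof -
  obtain f where f: "f \<in> polyfun N" "x = restrict f A" using assms by (auto simp: coord_carrier)
  have pf: "(\<lambda>v. - f v) \<in> polyfun N" using pf_mult[OF pf_const[of "-1"] f(1)] by simp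
  have e: "restrict (\<lambda>v. - x v) A = restrict (\<lambda>v. - f v) A" using f by (auto simp: restrict_def)
  have c: "restrict (\<lambda>v. - x v) A \<in> carrier (coord_ring N A)"
    unfolding e coord_carrier using pf by blast
  interpret cring "coord_ring N A" by (rule coord_cring)
  show ?thesis
  proof (rule minus_equality)
    show "restrict (\<lambda>v. - x v) A \<oplus>\<^bsub>coord_ring N A\<^esub> x = \<zero>\<^bsub>coord_ring N A\<^esub>"
      by (auto simp: coord_simps restrict_def f(2))
  qed (use assms c in auto)
qed




lemma (in cring) inv2_identity:
  assumes c: "Q \<in> carrier R" "r \<in> carrier R"
    and inv: "(\<one> \<ominus> Q) \<otimes> r = \<one>"
    and x: "x = (\<one> \<oplus> Q) \<otimes> r"
  shows "(\<one> \<ominus> Q) \<otimes> (x \<oplus> \<one>) = \<one> \<oplus> \<one>"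
proof -
  have "x \<oplus> \<one> = x \<oplus> (\<one> \<ominus> Q) \<otimes> r" using inv by simp
  also have "\<dots> = (\<one> \<oplus> \<one>) \<otimes> r" unfolding x using c by algebra
  finally have "(\<one> \<ominus> Q) \<otimes> (x \<oplus> \<one>) = (\<one> \<oplus> \<one>) \<otimes> ((\<one> \<ominus> Q) \<otimes> r)" using c by (simp add: m_ac)
  then show ?thesis using inv c by simp
qed



lemma prime_param:
  assumes K: "finite K"
    and inA: "\<And>v. v \<in> SK K (\<lambda>_. 0) \<Longrightarrow> Dq v \<noteq> 0 \<Longrightarrow> \<phi> v \<in> A"
    and homog: "\<And>f. f \<in> polyfun N \<Longrightarrow> \<exists>h k. good h \<and> (\<forall>v. Dq v \<noteq> 0 \<longrightarrow> f (\<phi> v) = h v / Dq v ^ k)"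
    and gD: "good Dq"
    and D0: "Dq (\<lambda>_. 0) \<noteq> 0"
  shows "primeideal {F \<in> carrier (coord_ring N A). \<forall>v\<in>SK K (\<lambda>_. 0). Dq v \<noteq> 0 \<longrightarrow> F (\<phi> v) = 0} (coord_ring N A)"
    (is "primeideal ?P ?R")
proof -
  interpret cring ?R by (rule coord_cring)
  have z0: "(\<lambda>_. 0) \<in> SK K (\<lambda>_. 0)" unfolding SK_def by simp
  have ev: "restrict f A (\<phi> v) = f (\<phi> v)" if "v \<in> SK K (\<lambda>_. 0)" "Dq v \<noteq> 0" for f v
    using inA[OF that] by simp
  show ?thesis
  proof (rule primeidealI2)
    show "additive_subgroup ?P ?R"
    proof (rule additive_subgroupI, rule add.subgroupI)
      show "?P \<subseteq> carrier ?R" by blast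
      have "\<zero>\<^bsub>?R\<^esub> \<in> ?P" using zero_closed inA by (auto simp: coord_simps)
      then show "?P \<noteq> {}" by blast
      fix a assume a: "a \<in> ?P"
      have "\<ominus>\<^bsub>?R\<^esub> a \<in> carrier ?R" using a by blast
      moreover have "\<forall>v\<in>SK K (\<lambda>_. 0). Dq v \<noteq> 0 \<longrightarrow> (\<ominus>\<^bsub>?R\<^esub> a) (\<phi> v) = 0"
        using coord_minus[of a N A] a inA by (auto simp: restrict_def)
      ultimately show "\<ominus>\<^bsub>?R\<^esub> a \<in> ?P" by blast
    next
      fix a b assume a: "a \<in> ?P" and b: "b \<in> ?P"
      have "a \<oplus>\<^bsub>?R\<^esub> b \<in> carrier ?R" using a b by blast
      moreover have "\<forall>v\<in>SK K (\<lambda>_. 0). Dq v \<noteq> 0 \<longrightarrow> (a \<oplus>\<^bsub>?R\<^esub> b) (\<phi> v) = 0"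
        using a b inA by (auto simp: coord_simps)
      ultimately show "a \<oplus>\<^bsub>?R\<^esub> b \<in> ?P" by blast
    qed
  next
    show "cring ?R" by (rule coord_cring)
  next
    fix a x assume a: "a \<in> ?P" and x: "x \<in> carrier ?R"
    have "x \<otimes>\<^bsub>?R\<^esub> a \<in> carrier ?R" using a x by blast
    moreover have "\<forall>v\<in>SK K (\<lambda>_. 0). Dq v \<noteq> 0 \<longrightarrow> (x \<otimes>\<^bsub>?R\<^esub> a) (\<phi> v) = 0"
      using a inA by (auto simp: coord_simps)
    ultimately show "x \<otimes>\<^bsub>?R\<^esub> a \<in> ?P" by blast
  next
    fix a x assume a: "a \<in> ?P" and x: "x \<in> carrier ?R"
    have "a \<otimes>\<^bsub>?R\<^esub> x \<in> carrier ?R" using a x by blast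
    moreover have "\<forall>v\<in>SK K (\<lambda>_. 0). Dq v \<noteq> 0 \<longrightarrow> (a \<otimes>\<^bsub>?R\<^esub> x) (\<phi> v) = 0"
      using a inA by (auto simp: coord_simps)
    ultimately show "a \<otimes>\<^bsub>?R\<^esub> x \<in> ?P" by blast
  next
    have "\<one>\<^bsub>?R\<^esub> \<notin> ?P" using inA[OF z0 D0] z0 D0 by (auto simp: coord_simps)
    then show "carrier ?R \<noteq> ?P" using one_closed by blast
  next
    fix a b assume a: "a \<in> carrier ?R" and b: "b \<in> carrier ?R" and ab: "a \<otimes>\<^bsub>?R\<^esub> b \<in> ?P"
    obtain f where f: "f \<in> polyfun N" "a = restrict f A" using a by (auto simp: coord_carrier)
    obtain g where g: "g \<in> polyfun N" "b = restrict g A" using b by (auto simp: coord_carrier)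
    obtain hf kf where hf: "good hf" "\<And>v. Dq v \<noteq> 0 \<Longrightarrow> f (\<phi> v) = hf v / Dq v ^ kf" using homog[OF f(1)] by blast
    obtain hg kg where hg: "good hg" "\<And>v. Dq v \<noteq> 0 \<Longrightarrow> g (\<phi> v) = hg v / Dq v ^ kg" using homog[OF g(1)] by blast
    have fg0: "f (\<phi> v) * g (\<phi> v) = 0" if "v \<in> SK K (\<lambda>_. 0)" "Dq v \<noteq> 0" for v
      using ab that inA[OF that] f g by (auto simp: coord_simps)
    have "\<forall>v\<in>SK K (\<lambda>_. 0). (hf v * hg v) * Dq v = 0"
    proof
      fix v assume v: "v \<in> SK K (\<lambda>_. 0)"
      show "(hf v * hg v) * Dq v = 0"
      proof (cases "Dq v = 0")
        case False
        then have "hf v / Dq v ^ kf * (hg v / Dq v ^ kg) = 0" using fg0[OF v False] hf(2) hg(2) by simp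
        then show ?thesis using False by simp
      qed simp
    qed
    then have "(\<forall>v\<in>SK K (\<lambda>_. 0). hf v * hg v = 0) \<or> (\<forall>v\<in>SK K (\<lambda>_. 0). Dq v = 0)"
      using domain_lemma[OF K good_mult[OF hf(1) hg(1)] gD] by blast
    then have "\<forall>v\<in>SK K (\<lambda>_. 0). hf v * hg v = 0" using D0 z0 by blast
    then have "(\<forall>v\<in>SK K (\<lambda>_. 0). hf v = 0) \<or> (\<forall>v\<in>SK K (\<lambda>_. 0). hg v = 0)"
      using domain_lemma[OF K hf(1) hg(1)] by blast
    then show "a \<in> ?P \<or> b \<in> ?P"
    proof
      assume "\<forall>v\<in>SK K (\<lambda>_. 0). hf v = 0"
      then have "a \<in> ?P" using a f hf(2) inA by auto
      then show ?thesis ..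
    next
      assume "\<forall>v\<in>SK K (\<lambda>_. 0). hg v = 0"
      then have "b \<in> ?P" using b g hg(2) inA by auto
      then show ?thesis ..
    qed
  qed
qed


context qsetup
begin

lemma cc_Vn: "c \<in> R \<Longrightarrow> cc c \<in> Vn" unfolding cc_def Vn_def by (simp add: zc_zero)

lemma cc_one: "cc 1 = e0" unfolding cc_def e0_def zc_one by auto

lemma cc_mult: "c \<in> R \<Longrightarrow> d \<in> R \<Longrightarrow> cc (c * d) = mul (cc c) (cc d)"
  unfolding cc_def mul_def MM_def by (rule ext) (simp add: zc_mult mult_ac)

lemma quad_coord_mul: "quad_coord n \<theta> c w k = mul (cc c) (mul w w) k"
  unfolding quad_coord_def mul_def cc_def MM_def m_def
  by (simp add: sum_distrib_left mult_ac)

lemma mul_cong: "(\<And>i. i < n \<Longrightarrow> u i = u' i) \<Longrightarrow> (\<And>i. i < n \<Longrightarrow> w i = w' i) \<Longrightarrow> mul u w = mul u' w'"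
  unfolding mul_def by (intro ext sum.cong refl) auto

lemma mul_divr: "mul u (\<lambda>k. w k / c) = (\<lambda>k. mul u w k / c)"
  unfolding mul_def by (auto simp: sum_divide_distrib)

lemma mul_divl: "mul (\<lambda>k. w k / c) u = (\<lambda>k. mul w u k / c)"
  unfolding mul_def by (auto simp: sum_divide_distrib)

lemma mul_scal_e0: "u \<in> Vn \<Longrightarrow> mul u (\<lambda>k. c * e0 k) = (\<lambda>k. c * u k)"
  using mul_scale_left[of c e0 u] mul_one[of u] mul_comm by metis

lemma Ad_Vn: "Ad w \<in> Vn" unfolding Ad_def Vn_def by auto

lemma AR_minus': "x \<in> Vn \<Longrightarrow> y \<in> Vn \<Longrightarrow> x \<ominus>\<^bsub>AR\<^esub> y = (\<lambda>k. x k - y k)"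
  unfolding a_minus_def using AR_minus by (simp add: AR_simps)

end

locale qsetup2 = qsetup +
  fixes a b :: real
  assumes aR: "a \<in> ring_of_integers F" and bR: "b \<in> ring_of_integers F"
begin

definition "\<alpha> = cc a"
definition "\<beta> = cc b"
definition Yp :: "(nat \<Rightarrow> complex) \<Rightarrow> nat \<Rightarrow> complex" where "Yp v = (\<lambda>i. if i < n then v (0 + i) else 0)"
definition Zp :: "(nat \<Rightarrow> complex) \<Rightarrow> nat \<Rightarrow> complex" where "Zp v = (\<lambda>i. if i < n then v (n + i) else 0)"
definition Tp :: "(nat \<Rightarrow> complex) \<Rightarrow> nat \<Rightarrow> complex" where "Tp v = (\<lambda>i. if i < n then v (2*n + i) else 0)"
definition Qp :: "(nat \<Rightarrow> complex) \<Rightarrow> nat \<Rightarrow> complex" where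
  "Qp v = (\<lambda>k. mul \<alpha> (mul (Yp v) (Yp v)) k + mul \<beta> (mul (Zp v) (Zp v)) k - mul (mul \<alpha> \<beta>) (mul (Tp v) (Tp v)) k)"
definition qp :: "(nat \<Rightarrow> complex) \<Rightarrow> nat \<Rightarrow> complex" where "qp v = (\<lambda>k. e0 k - Qp v k)"
definition Dq :: "(nat \<Rightarrow> complex) \<Rightarrow> complex" where "Dq v = Dt (qp v)"
definition Ev :: "(nat \<Rightarrow> complex) \<Rightarrow> nat \<Rightarrow> complex" where "Ev v = Ad (qp v)"
definition rr :: "(nat \<Rightarrow> complex) \<Rightarrow> nat \<Rightarrow> complex" where "rr v = (\<lambda>k. Ev v k / Dq v)"
definition xr :: "(nat \<Rightarrow> complex) \<Rightarrow> nat \<Rightarrow> complex" where "xr v = mul (\<lambda>k. e0 k + Qp v k) (rr v)"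
definition sr :: "(nat \<Rightarrow> complex) \<Rightarrow> nat \<Rightarrow> complex" where "sr v = mul (\<lambda>k. e0 k + e0 k) (rr v)"
definition xh :: "(nat \<Rightarrow> complex) \<Rightarrow> nat \<Rightarrow> complex" where "xh v = mul (\<lambda>k. e0 k + Qp v k) (Ev v)"
definition sh :: "(nat \<Rightarrow> complex) \<Rightarrow> nat \<Rightarrow> complex" where "sh v = mul (\<lambda>k. e0 k + e0 k) (Ev v)"

definition blk :: "nat \<Rightarrow> (nat \<Rightarrow> complex) \<Rightarrow> nat \<Rightarrow> complex" where
  "blk s v = (\<lambda>i. if i < n then v (s + i) else 0)"

definition phi :: "(nat \<Rightarrow> complex) \<Rightarrow> nat \<Rightarrow> complex" where
  "phi v = (\<lambda>i. if i < n then xr v i else if i < 2*n then mul (sr v) (Yp v) (i - n)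
      else if i < 3*n then mul (sr v) (Zp v) (i - 2*n) else if i < 4*n then mul (sr v) (Tp v) (i - 3*n) else 0)"
definition hphi :: "(nat \<Rightarrow> complex) \<Rightarrow> nat \<Rightarrow> complex" where
  "hphi v = (\<lambda>i. if i < n then xh v i else if i < 2*n then mul (sh v) (Yp v) (i - n)
      else if i < 3*n then mul (sh v) (Zp v) (i - 2*n) else if i < 4*n then mul (sh v) (Tp v) (i - 3*n) else 0)"

lemma Yp_blk: "Yp = blk 0" and Zp_blk: "Zp = blk n" and Tp_blk: "Tp = blk (2*n)"
  unfolding Yp_def Zp_def Tp_def blk_def by auto

lemma blk_Vn: "blk s v \<in> Vn" unfolding blk_def Vn_def by auto

lemma pvec_blk: "s + n \<le> N \<Longrightarrow> pvec N (blk s)" unfolding blk_def by (rule pvec_block)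

lemma alpha_Vn: "\<alpha> \<in> Vn" and beta_Vn: "\<beta> \<in> Vn" using cc_Vn aR bR unfolding \<alpha>_def \<beta>_def by auto

lemma pvec_Qp: "pvec (3*n) Qp"
  unfolding Qp_def Yp_blk Zp_blk Tp_blk
  by (intro pvec_sub pvec_add pvec_mul pvec_const pvec_blk) auto

lemma pvec_qp: "pvec (3*n) qp"
  unfolding qp_def by (intro pvec_sub pvec_const pvec_Qp)

lemma pf_Dq: "Dq \<in> polyfun (3*n)"
  using pf_Dt[OF pvec_qp] unfolding Dq_def[abs_def] by simp

lemma pvec_Ev: "pvec (3*n) Ev"
  using pvec_Ad[OF pvec_qp] unfolding Ev_def[abs_def] by simp

lemma pvec_xh: "pvec (3*n) xh"
  unfolding xh_def[abs_def] by (intro pvec_mul pvec_add pvec_const pvec_Qp pvec_Ev)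

lemma pvec_sh: "pvec (3*n) sh"
  unfolding sh_def[abs_def] by (intro pvec_mul pvec_add pvec_const pvec_Ev)

lemma pf_hphi: "(\<lambda>v. hphi v i) \<in> polyfun (3*n)"
proof -
  have y: "pvec (3*n) (\<lambda>v. mul (sh v) (Yp v))" unfolding Yp_blk by (intro pvec_mul pvec_sh pvec_blk) auto
  have z: "pvec (3*n) (\<lambda>v. mul (sh v) (Zp v))" unfolding Zp_blk by (intro pvec_mul pvec_sh pvec_blk) auto
  have t: "pvec (3*n) (\<lambda>v. mul (sh v) (Tp v))" unfolding Tp_blk by (intro pvec_mul pvec_sh pvec_blk) auto
  show ?thesis unfolding hphi_def
    by (auto intro!: pf_if pf_c pvecD[OF pvec_xh] pvecD[OF y] pvecD[OF z] pvecD[OF t])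
qed

lemma phi_hphi: "Dq v \<noteq> 0 \<Longrightarrow> phi v i = hphi v i / Dq v"
proof -
  have xr: "xr v = (\<lambda>k. xh v k / Dq v)" unfolding xr_def xh_def rr_def by (rule mul_divr)
  have sr: "sr v = (\<lambda>k. sh v k / Dq v)" unfolding sr_def sh_def rr_def by (rule mul_divr)
  show "phi v i = hphi v i / Dq v" unfolding phi_def hphi_def xr sr mul_divl by simp
qed

lemma frac_add: "(D::complex) \<noteq> 0 \<Longrightarrow> x / D^k1 + y / D^k2 = (x * D^k2 + y * D^k1) / D^(k1+k2)"
  by (simp add: power_add add_divide_distrib)

lemma homog: "f \<in> polyfun (4*n) \<Longrightarrow> \<exists>h k. h \<in> polyfun (3*n) \<and> (\<forall>v. Dq v \<noteq> 0 \<longrightarrow> f (phi v) = h v / Dq v ^ k)"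
proof (induction rule: polyfun.induct)
  case (pf_const c)
  then show ?case by (intro exI[of _ "\<lambda>_. c"] exI[of _ 0]) (auto intro: pf_c)
next
  case (pf_var i)
  then show ?case using phi_hphi by (intro exI[of _ "\<lambda>v. hphi v i"] exI[of _ 1]) (auto intro: pf_hphi)
next
  case (pf_add f g)
  then obtain h1 k1 h2 k2 where h: "h1 \<in> polyfun (3*n)" "\<forall>v. Dq v \<noteq> 0 \<longrightarrow> f (phi v) = h1 v / Dq v ^ k1"
    "h2 \<in> polyfun (3*n)" "\<forall>v. Dq v \<noteq> 0 \<longrightarrow> g (phi v) = h2 v / Dq v ^ k2" by blast
  show ?case
  proof (intro exI conjI allI impI)
    show "(\<lambda>v. h1 v * Dq v ^ k2 + h2 v * Dq v ^ k1) \<in> polyfun (3*n)"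
      using h by (intro pf_a pf_m pf_pow pf_Dq)
    fix v assume "Dq v \<noteq> 0"
    then show "f (phi v) + g (phi v) = (h1 v * Dq v ^ k2 + h2 v * Dq v ^ k1) / Dq v ^ (k1 + k2)"
      using h frac_add by simp
  qed
next
  case (pf_mult f g)
  then obtain h1 k1 h2 k2 where h: "h1 \<in> polyfun (3*n)" "\<forall>v. Dq v \<noteq> 0 \<longrightarrow> f (phi v) = h1 v / Dq v ^ k1"
    "h2 \<in> polyfun (3*n)" "\<forall>v. Dq v \<noteq> 0 \<longrightarrow> g (phi v) = h2 v / Dq v ^ k2" by blast
  show ?case
  proof (intro exI conjI allI impI)
    show "(\<lambda>v. h1 v * h2 v) \<in> polyfun (3*n)" using h by (intro pf_m)
    fix v assume "Dq v \<noteq> 0"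
    then show "f (phi v) * g (phi v) = (h1 v * h2 v) / Dq v ^ (k1 + k2)"
      using h by (simp add: power_add)
  qed
qed

lemma pf_good: "f \<in> polyfun N \<Longrightarrow> good f"
  unfolding good_def using pf_holo by blast


lemma mul_zero_l: "mul (\<lambda>_. 0) u = (\<lambda>_. 0)" unfolding mul_def by simp

lemma Vn_add: "x \<in> Vn \<Longrightarrow> y \<in> Vn \<Longrightarrow> (\<lambda>k. x k + y k) \<in> Vn" unfolding Vn_def by auto
lemma Vn_diff: "x \<in> Vn \<Longrightarrow> y \<in> Vn \<Longrightarrow> (\<lambda>k. x k - y k) \<in> Vn" unfolding Vn_def by auto
lemma Vn_div: "x \<in> Vn \<Longrightarrow> (\<lambda>k. x k / c) \<in> Vn" unfolding Vn_def by auto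

lemma Qp_Vn: "Qp v \<in> Vn" unfolding Qp_def by (intro Vn_diff Vn_add mul_Vn)
lemma qp_Vn: "qp v \<in> Vn" unfolding qp_def by (intro Vn_diff e0_Vn Qp_Vn)
lemma rr_Vn: "rr v \<in> Vn" unfolding rr_def Ev_def by (intro Vn_div Ad_Vn)

lemma Dq0: "Dq (\<lambda>_. 0) = 1"
proof -
  have "Yp (\<lambda>_. 0) = (\<lambda>_. 0)" "Zp (\<lambda>_. 0) = (\<lambda>_. 0)" "Tp (\<lambda>_. 0) = (\<lambda>_. 0)"
    unfolding Yp_def Zp_def Tp_def by auto
  then have "qp (\<lambda>_. 0) = e0" unfolding qp_def Qp_def by (simp add: mul_zero mul_zero_l)
  then show ?thesis unfolding Dq_def by (simp add: Dt_e0)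
qed

lemma inv_rr: "Dq v \<noteq> 0 \<Longrightarrow> mul (qp v) (rr v) = e0"
  unfolding rr_def mul_divr Ev_def using cramer[of "qp v"] unfolding Dq_def by auto

lemma AR_facts: assumes "Dq v \<noteq> 0"
  shows "Qp v = \<alpha> \<otimes>\<^bsub>AR\<^esub> (Yp v \<otimes>\<^bsub>AR\<^esub> Yp v) \<oplus>\<^bsub>AR\<^esub> \<beta> \<otimes>\<^bsub>AR\<^esub> (Zp v \<otimes>\<^bsub>AR\<^esub> Zp v) \<ominus>\<^bsub>AR\<^esub> (\<alpha> \<otimes>\<^bsub>AR\<^esub> \<beta>) \<otimes>\<^bsub>AR\<^esub> (Tp v \<otimes>\<^bsub>AR\<^esub> Tp v)"
    and "(\<one>\<^bsub>AR\<^esub> \<ominus>\<^bsub>AR\<^esub> Qp v) \<otimes>\<^bsub>AR\<^esub> rr v = \<one>\<^bsub>AR\<^esub>"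
    and "xr v = (\<one>\<^bsub>AR\<^esub> \<oplus>\<^bsub>AR\<^esub> Qp v) \<otimes>\<^bsub>AR\<^esub> rr v"
    and "sr v = (\<one>\<^bsub>AR\<^esub> \<oplus>\<^bsub>AR\<^esub> \<one>\<^bsub>AR\<^esub>) \<otimes>\<^bsub>AR\<^esub> rr v"
proof -
  show "Qp v = \<alpha> \<otimes>\<^bsub>AR\<^esub> (Yp v \<otimes>\<^bsub>AR\<^esub> Yp v) \<oplus>\<^bsub>AR\<^esub> \<beta> \<otimes>\<^bsub>AR\<^esub> (Zp v \<otimes>\<^bsub>AR\<^esub> Zp v) \<ominus>\<^bsub>AR\<^esub> (\<alpha> \<otimes>\<^bsub>AR\<^esub> \<beta>) \<otimes>\<^bsub>AR\<^esub> (Tp v \<otimes>\<^bsub>AR\<^esub> Tp v)"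
    unfolding Qp_def AR_simps by (subst AR_minus') (auto intro: Vn_add mul_Vn)
  show "(\<one>\<^bsub>AR\<^esub> \<ominus>\<^bsub>AR\<^esub> Qp v) \<otimes>\<^bsub>AR\<^esub> rr v = \<one>\<^bsub>AR\<^esub>"
    unfolding AR_simps AR_minus'[OF e0_Vn Qp_Vn] using inv_rr[OF assms] by (simp add: qp_def)
  show "xr v = (\<one>\<^bsub>AR\<^esub> \<oplus>\<^bsub>AR\<^esub> Qp v) \<otimes>\<^bsub>AR\<^esub> rr v" unfolding AR_simps xr_def ..
  show "sr v = (\<one>\<^bsub>AR\<^esub> \<oplus>\<^bsub>AR\<^esub> \<one>\<^bsub>AR\<^esub>) \<otimes>\<^bsub>AR\<^esub> rr v" unfolding AR_simps sr_def ..
qed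

lemma AR_comb: "A \<in> Vn \<Longrightarrow> B \<in> Vn \<Longrightarrow> C \<in> Vn \<Longrightarrow> D \<in> Vn \<Longrightarrow>
   A \<ominus>\<^bsub>AR\<^esub> B \<ominus>\<^bsub>AR\<^esub> C \<oplus>\<^bsub>AR\<^esub> D = (\<lambda>k. A k - B k - C k + D k)"
  by (simp add: AR_minus' Vn_diff AR_simps)

lemma norm_one: assumes "Dq v \<noteq> 0"
  shows "(\<lambda>k. mul e0 (mul (xr v) (xr v)) k - mul \<alpha> (mul (mul (sr v) (Yp v)) (mul (sr v) (Yp v))) k
      - mul \<beta> (mul (mul (sr v) (Zp v)) (mul (sr v) (Zp v))) k
      + mul (mul \<alpha> \<beta>) (mul (mul (sr v) (Tp v)) (mul (sr v) (Tp v))) k) = e0"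
proof -
  interpret cring AR by (rule AR_cring)
  have c: "\<alpha> \<in> carrier AR" "\<beta> \<in> carrier AR" "Yp v \<in> carrier AR" "Zp v \<in> carrier AR" "Tp v \<in> carrier AR"
    "rr v \<in> carrier AR"
    unfolding AR_simps Yp_blk Zp_blk Tp_blk by (auto intro: alpha_Vn beta_Vn blk_Vn rr_Vn)
  note af = AR_facts[OF assms]
  have "\<one>\<^bsub>AR\<^esub> \<otimes>\<^bsub>AR\<^esub> (xr v \<otimes>\<^bsub>AR\<^esub> xr v) \<ominus>\<^bsub>AR\<^esub> \<alpha> \<otimes>\<^bsub>AR\<^esub> ((sr v \<otimes>\<^bsub>AR\<^esub> Yp v) \<otimes>\<^bsub>AR\<^esub> (sr v \<otimes>\<^bsub>AR\<^esub> Yp v))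
     \<ominus>\<^bsub>AR\<^esub> \<beta> \<otimes>\<^bsub>AR\<^esub> ((sr v \<otimes>\<^bsub>AR\<^esub> Zp v) \<otimes>\<^bsub>AR\<^esub> (sr v \<otimes>\<^bsub>AR\<^esub> Zp v))
     \<oplus>\<^bsub>AR\<^esub> (\<alpha> \<otimes>\<^bsub>AR\<^esub> \<beta>) \<otimes>\<^bsub>AR\<^esub> ((sr v \<otimes>\<^bsub>AR\<^esub> Tp v) \<otimes>\<^bsub>AR\<^esub> (sr v \<otimes>\<^bsub>AR\<^esub> Tp v)) = \<one>\<^bsub>AR\<^esub>"
    by (rule quat_identity[OF c af(1) af(2) af(3)]) (simp_all add: af(4))
  then show ?thesis unfolding AR_simps(2,3) AR_comb[OF mul_Vn mul_Vn mul_Vn mul_Vn] .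
qed

lemma phi_in_A: assumes "Dq v \<noteq> 0" shows "phi v \<in> code_algset n \<theta> a b"
proof -
  have x: "mul (\<lambda>i. phi v i) (\<lambda>i. phi v i) = mul (xr v) (xr v)" by (rule mul_cong) (auto simp: phi_def)
  have y: "mul (\<lambda>i. phi v (n + i)) (\<lambda>i. phi v (n + i)) = mul (mul (sr v) (Yp v)) (mul (sr v) (Yp v))"
    by (rule mul_cong) (auto simp: phi_def)
  have z: "mul (\<lambda>i. phi v (2*n + i)) (\<lambda>i. phi v (2*n + i)) = mul (mul (sr v) (Zp v)) (mul (sr v) (Zp v))"
    by (rule mul_cong) (auto simp: phi_def)
  have t: "mul (\<lambda>i. phi v (3*n + i)) (\<lambda>i. phi v (3*n + i)) = mul (mul (sr v) (Tp v)) (mul (sr v) (Tp v))"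
    by (rule mul_cong) (auto simp: phi_def)
  have g: "gpoly n \<theta> a b k (phi v) = e0 k" for k
    unfolding gpoly_def quad_coord_mul x y z t cc_one cc_mult[OF aR bR] \<alpha>_def[symmetric] \<beta>_def[symmetric]
    using fun_cong[OF norm_one[OF assms], of k] by simp
  show ?thesis unfolding code_algset_def using g by (auto simp: phi_def e0_def)
qed

definition sepf :: "nat \<Rightarrow> (nat \<Rightarrow> complex) \<Rightarrow> complex" where
  "sepf p pt = mul (blk (n + n * (p div n)) pt) (Ad (\<lambda>k. blk 0 pt k + e0 k)) (p mod n)"

lemma pf_sepf: "p < 3*n \<Longrightarrow> sepf p \<in> polyfun (4*n)"
proof -
  assume p: "p < 3*n"
  have "p div n < 3" using p n0 by (simp add: less_mult_imp_div_less)
  then have le: "n + n * (p div n) + n \<le> 4 * n" by (auto simp: algebra_simps)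
  have "pvec (4*n) (\<lambda>pt. mul (blk (n + n * (p div n)) pt) (Ad (\<lambda>k. blk 0 pt k + e0 k)))"
    by (intro pvec_mul pvec_blk pvec_Ad pvec_add pvec_const le) simp
  then show ?thesis unfolding sepf_def[abs_def] by (rule pvecD)
qed

lemma sepf_phi: assumes p: "p < 3*n" and D: "Dq v \<noteq> 0"
  shows "\<exists>d. d \<noteq> 0 \<and> sepf p (phi v) = d * v p"
proof -
  interpret cring AR by (rule AR_cring)
  define s where "s = n * (p div n)"
  define j where "j = p mod n"
  have pj: "p = s + j" unfolding s_def j_def by simp
  have jn: "j < n" unfolding j_def using n0 by simp
  have "p div n < 3" using p n0 by (simp add: less_mult_imp_div_less)
  then have s3: "s = 0 \<or> s = n \<or> s = 2*n" unfolding s_def by (auto simp: less_Suc_eq numeral_3_eq_3)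
  define B where "B = blk s v"
  have B: "B = Yp v \<or> B = Zp v \<or> B = Tp v" using s3 unfolding B_def Yp_blk Zp_blk Tp_blk by auto
  have xb: "blk 0 (phi v) = xr v"
  proof
    fix i show "blk 0 (phi v) i = xr v i"
      using mul_Vn[of "\<lambda>k. e0 k + Qp v k" "rr v"] unfolding blk_def xr_def[symmetric]
      by (auto simp: phi_def Vn_def)
  qed
  have yb: "blk (n + s) (phi v) = mul (sr v) B"
  proof
    fix i show "blk (n + s) (phi v) i = mul (sr v) B i"
      using s3 mul_Vn[of "sr v" B] unfolding blk_def B_def
      by (auto simp: phi_def Vn_def Yp_def Zp_def Tp_def)
  qed
  define E where "E = Ad (\<lambda>k. xr v k + e0 k)"
  define d where "d = Dt (\<lambda>k. xr v k + e0 k)"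
  have cE: "mul (\<lambda>k. xr v k + e0 k) E = (\<lambda>k. d * e0 k)" unfolding E_def d_def by (rule cramer)
  note af = AR_facts[OF D]
  have cQ: "Qp v \<in> carrier AR" "rr v \<in> carrier AR" "E \<in> carrier AR" "(\<lambda>k. d * e0 k) \<in> carrier AR"
    "B \<in> carrier AR"
    unfolding AR_simps E_def B_def using Qp_Vn rr_Vn Ad_Vn blk_Vn e0_Vn by (auto simp: Vn_def)
  have "mul (sr v) B \<otimes>\<^bsub>AR\<^esub> E = B \<otimes>\<^bsub>AR\<^esub> (\<lambda>k. d * e0 k)"
    by (rule sep_identity[OF cQ(1) cQ(5) cQ(2) cQ(3) cQ(4) af(2) af(3)])
       (use cE af(4) in \<open>simp_all add: AR_simps\<close>)
  then have m: "mul (mul (sr v) B) E = (\<lambda>k. d * B k)" unfolding AR_simps using mul_scal_e0[OF blk_Vn] B_def by simp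
  have "(\<one>\<^bsub>AR\<^esub> \<ominus>\<^bsub>AR\<^esub> Qp v) \<otimes>\<^bsub>AR\<^esub> (xr v \<oplus>\<^bsub>AR\<^esub> \<one>\<^bsub>AR\<^esub>) = \<one>\<^bsub>AR\<^esub> \<oplus>\<^bsub>AR\<^esub> \<one>\<^bsub>AR\<^esub>"
    by (rule inv2_identity[OF cQ(1) cQ(2) af(2) af(3)])
  then have "mul (qp v) (\<lambda>k. xr v k + e0 k) = (\<lambda>k. e0 k + e0 k)"
    unfolding AR_simps AR_minus'[OF e0_Vn Qp_Vn] qp_def by simp
  then have "mul (\<lambda>k. qp v k / 2) (\<lambda>k. xr v k + e0 k) = e0" unfolding mul_divl by auto
  then have d0: "d \<noteq> 0" unfolding d_def by (rule Dt_nonzero)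
  have "sepf p (phi v) = mul (mul (sr v) B) E j"
    unfolding sepf_def xb yb E_def s_def[symmetric] j_def[symmetric] ..
  also have "\<dots> = d * B j" using m by simp
  also have "B j = v p" unfolding B_def blk_def pj using jn by simp
  finally show ?thesis using d0 by blast
qed


lemma exists_c: "\<exists>c. c \<noteq> 0 \<and> Dq ((\<lambda>_. 0)(p := c)) \<noteq> 0"
proof (rule ccontr)
  assume "\<not> ?thesis"
  then have H: "\<And>c. c \<in> UNIV - {0} \<Longrightarrow> Dq ((\<lambda>_. 0)(p := c)) = 0" by blast
  have lim: "(0::complex) islimpt (UNIV - {0})"
    using islimpt_insert[of 0 0 "UNIV - {0::complex}"] by (simp add: insert_Diff_single)
  have "(\<lambda>c. Dq ((\<lambda>_. 0)(p := c))) 0 = 0"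
  proof (rule analytic_continuation[where f = "\<lambda>c. Dq ((\<lambda>_. 0)(p := c))" and S = UNIV and U = "UNIV - {0}" and \<xi> = 0 and w = 0])
    show "(\<lambda>c. Dq ((\<lambda>_. 0)(p := c))) holomorphic_on UNIV" by (rule pf_holo[OF pf_Dq])
  qed (use H lim in auto)
  moreover have "(\<lambda>_. 0)(p := 0) = (\<lambda>_. (0::complex))" by auto
  ultimately show False using Dq0 by simp
qed

theorem dim_ge: "enat (3*n) \<le> alg_set_dim (4*n) (code_algset n \<theta> a b)"
proof -
  define A where "A = code_algset n \<theta> a b"
  define P where "P j = {F \<in> carrier (coord_ring (4*n) A). \<forall>v\<in>SK {..<3*n - j} (\<lambda>_. 0). Dq v \<noteq> 0 \<longrightarrow> F (phi v) = 0}" for j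
  have hom: "\<exists>h k. good h \<and> (\<forall>v. Dq v \<noteq> 0 \<longrightarrow> f (phi v) = h v / Dq v ^ k)" if "f \<in> polyfun (4*n)" for f
    using homog[OF that] pf_good by blast
  have prime: "primeideal (P j) (coord_ring (4*n) A)" for j
    unfolding P_def
  proof (rule prime_param)
    show "phi v \<in> A" if "Dq v \<noteq> 0" for v using phi_in_A[OF that] unfolding A_def .
  qed (use hom pf_good[OF pf_Dq] Dq0 in auto)
  have strict: "P j \<subset> P (Suc j)" if j: "j < 3*n" for j
  proof
    have "SK {..<3*n - Suc j} (\<lambda>_. 0) \<subseteq> SK {..<3*n - j} (\<lambda>_. 0)" unfolding SK_def by auto
    then show "P j \<subseteq> P (Suc j)" unfolding P_def by blast
    define p where "p = 3*n - Suc j"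
    have p3: "p < 3*n" and pK: "p \<in> {..<3*n - j}" and pK': "p \<notin> {..<3*n - Suc j}"
      using j unfolding p_def by auto
    define G where "G = restrict (sepf p) A"
    have Gc: "G \<in> carrier (coord_ring (4*n) A)" unfolding G_def coord_carrier using pf_sepf[OF p3] by blast
    have "G \<in> P (Suc j)"
      unfolding P_def
    proof (intro CollectI conjI ballI impI Gc)
      fix v assume v: "v \<in> SK {..<3*n - Suc j} (\<lambda>_. 0)" and D: "Dq v \<noteq> 0"
      have "v p = 0" using v pK' unfolding SK_def by blast
      moreover obtain d where "sepf p (phi v) = d * v p" using sepf_phi[OF p3 D] by blast
      ultimately show "G (phi v) = 0" unfolding G_def using phi_in_A[OF D] A_def by simp
    qed
    moreover have "G \<notin> P j"
    proof
      assume G: "G \<in> P j"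
      obtain c where c: "c \<noteq> 0" "Dq ((\<lambda>_. 0)(p := c)) \<noteq> 0" using exists_c by blast
      define v where "v = (\<lambda>_. 0)(p := c)"
      have vS: "v \<in> SK {..<3*n - j} (\<lambda>_. 0)" unfolding v_def SK_def using pK by auto
      have D: "Dq v \<noteq> 0" using c(2) by (simp add: v_def)
      obtain d where d: "d \<noteq> 0" "sepf p (phi v) = d * v p" using sepf_phi[OF p3 D] by blast
      have "G (phi v) = 0" using G vS D unfolding P_def by blast
      then have "d * c = 0" using d phi_in_A[OF D] unfolding G_def A_def v_def by simp
      then show False using d c by simp
    qed
    ultimately show "P j \<noteq> P (Suc j)" by blast
  qed
  have "enat (3*n) \<in> {enat d | d. \<exists>P :: nat \<Rightarrow> ((nat \<Rightarrow> complex) \<Rightarrow> complex) set.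
       (\<forall>i\<le>d. primeideal (P i) (coord_ring (4*n) A)) \<and> (\<forall>i<d. P i \<subset> P (Suc i))}"
    using prime strict by blast
  then show ?thesis unfolding alg_set_dim_def A_def by (rule Sup_upper)
qed

end

lemma nfd_n0: assumes "number_field_deg F n" shows "0 < n"
proof (rule ccontr)
  assume "\<not> 0 < n"
  then have n: "n = 0" by simp
  have "real_subfield F" using assms unfolding number_field_deg_def by blast
  then have "1 \<in> F" unfolding real_subfield_def by blast
  then show False using assms n unfolding number_field_deg_def by auto
qed

theorem mainTheorem2:
  fixes F :: "real set" and n :: nat and a b :: real and \<theta> :: "nat \<Rightarrow> real"
  assumes "number_field_deg F n"
    and "totally_real F"
    and "a \<in> ring_of_integers F" and "a \<noteq> 0"
    and "b \<in> ring_of_integers F" and "b \<noteq> 0"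
    and "quat_division_algebra F a b"
    and "card {\<sigma>. field_emb F \<sigma> \<and> real_quat_iso_M2 (Re (\<sigma> a)) (Re (\<sigma> b))} = 1"
    and "card {\<sigma>. field_emb F \<sigma> \<and> real_quat_iso_hamilton (Re (\<sigma> a)) (Re (\<sigma> b))} = n - 1"
    and "integral_basis F n \<theta>" and "\<theta> 0 = 1"
  shows "alg_set_dim (4 * n) (code_algset n \<theta> a b) \<ge> enat (3 * n)"
proof -
  interpret qsetup2 F n \<theta> a b
  proof
    show "real_subfield F" using assms(1) unfolding number_field_deg_def by blast
    show "0 < n" using nfd_n0[OF assms(1)] .
  qed (use assms in auto)
  show ?thesis by (rule dim_ge)
qed


end
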